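(* Let the data $\eta,Q_g,\Psi,c_{max},\theta_s$ be as in the context, and let the pyrolysis heat satisfy $Q_p>0$. Let $c_{min}\in(c_{max},0)$ be the unique value with $\theta_s(c_{min})=\frac{Q_p}{Q_g+Q_p}$. Then there exists exactly one $c\in[c_{max},0]$ for which the interface problem (P$_c$) described in the context admits a solution $\theta$, and this $c$ belongs to the interval $(c_{max},c_{min})$.
   Context: Dimensionless travelling-wave formulation of a solid-propellant combustion model ($x<0$ inert solid, $x>0$ gas, interface at $x=0$; $\theta$ dimensionless temperature; $c<0$ dimensionless regression velocity). Data: $\eta>0$; gas reaction heat $Q_g>0$; pyrolysis heat $Q_p\in\mathbb R$; $\Psi:[0,1]\to[0,\infty)$ of class $C^\infty$ with $\Psi(\theta)>0$ for $\theta\in[0,1)$ and $\Psi(1)=0$; a number $c_{max}<0$ and a surface-temperature map $\theta_s:[c_{max},0]\to[0,1]$ (inverse of a pyrolysis law with cut-off at the initial temperature) that is continuous and strictly decreasing with $\theta_s(0)=0$, $\theta_s(c_{max})=1$, and $C^\infty$ on $[c_{max},0)$ with $\theta_s'(c)<0$ there. Define $S(c):=\eta\,\frac{Q_p}{Q_p+Q_g}\,c$. For $c\in[c_{max},0]$, problem (P$_c$) asks for $\theta:\mathbb R\to[0,1]$, continuous, of class $C^2$ on $(-\infty,0]$ and on $[0,\infty)$ (one-sided derivatives at $0$), such that $\theta''+c\theta'=0$ for $x<0$; $\theta''+\eta c\theta'=-\Psi(\theta)$ for $x>0$; $\theta(x)\to0$ as $x\to-\infty$, $\theta(0)=\theta_s(c)$,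 $\theta(x)\to1$ as $x\to+\infty$, $\theta'(x)\to0$ as $x\to\pm\infty$; and the interface heat balance $\theta'(0^+)-\eta\,\theta'(0^-)=S(c)$. *)

theory Defs
  imports "HOL-Analysis.Analysis"
begin

definition smooth_real :: "(real \<Rightarrow> real) \<Rightarrow> bool" where
  "smooth_real g \<longleftrightarrow> (\<forall>k::nat. \<forall>x. ((deriv ^^ k) g) differentiable (at x))"

definition smooth_on_open :: "real set \<Rightarrow> (real \<Rightarrow> real) \<Rightarrow> bool" where
  "smooth_on_open S g \<longleftrightarrow> (\<forall>k::nat. \<forall>x\<in>S. ((deriv ^^ k) g) differentiable (at x))"

definition S_term :: "real \<Rightarrow> real \<Rightarrow> real \<Rightarrow> real \<Rightarrow> real" where
  "S_term eta Qp Qg c = eta * (Qp / (Qp + Qg)) * c"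

text \<open>theta solves problem (P_c). The functions d1,d2 are the first and second
  (one-sided at 0) derivatives of theta on (-inf,0], and e1,e2 those on [0,inf).\<close>
definition solves_Pc ::
  "real \<Rightarrow> real \<Rightarrow> real \<Rightarrow> (real \<Rightarrow> real) \<Rightarrow> (real \<Rightarrow> real) \<Rightarrow> real \<Rightarrow> (real \<Rightarrow> real) \<Rightarrow> bool" where
  "solves_Pc eta Qg Qp Psi ths c theta \<longleftrightarrow>
     (\<forall>x. theta x \<in> {0..1}) \<and> continuous_on UNIV theta \<and>
     (\<exists>d1 d2 e1 e2.
        (\<forall>x\<le>0. (theta has_real_derivative d1 x) (at x within {..0})) \<and>
        (\<forall>x\<le>0. (d1 has_real_derivative d2 x) (at x within {..0})) \<and>
        continuous_on {..0} d2 \<and>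
        (\<forall>x\<ge>0. (theta has_real_derivative e1 x) (at x within {0..})) \<and>
        (\<forall>x\<ge>0. (e1 has_real_derivative e2 x) (at x within {0..})) \<and>
        continuous_on {0..} e2 \<and>
        (\<forall>x<0. d2 x + c * d1 x = 0) \<and>
        (\<forall>x>0. e2 x + eta * c * e1 x = - Psi (theta x)) \<and>
        (theta \<longlongrightarrow> 0) at_bot \<and>
        theta 0 = ths c \<and>
        (theta \<longlongrightarrow> 1) at_top \<and>
        (d1 \<longlongrightarrow> 0) at_bot \<and>
        (e1 \<longlongrightarrow> 0) at_top \<and>
        e1 0 - eta * d1 0 = S_term eta Qp Qg c)"

end

theory Submission
  imports Defs
begin



primrec pic :: "(real \<Rightarrow> real) \<Rightarrow> real \<Rightarrow> real \<Rightarrow> real \<Rightarrow> nat \<Rightarrow> real \<Rightarrow> real \<times> real" where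
  "pic G k a b 0 = (\<lambda>t. (a, b))"
| "pic G k a b (Suc n) = (\<lambda>t. (a + integral {0..t} (\<lambda>s. snd (pic G k a b n s)),
      b + integral {0..t} (\<lambda>s. k * snd (pic G k a b n s) - G (fst (pic G k a b n s)))))"

declare pic.simps(2)[simp del]

lemma int_two_bound:
  fixes f1 f2 h :: "real \<Rightarrow> real"
  assumes "continuous_on {0..t} f1" "continuous_on {0..t} f2" "continuous_on {0..t} h"
    and "\<And>s. s \<in> {0..t} \<Longrightarrow> \<bar>f1 s\<bar> + \<bar>f2 s\<bar> \<le> h s"
  shows "\<bar>integral {0..t} f1\<bar> + \<bar>integral {0..t} f2\<bar> \<le> integral {0..t} h"
proof -
  have i1: "f1 integrable_on {0..t}" "f2 integrable_on {0..t}" "h integrable_on {0..t}"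
    using assms by (auto intro: integrable_continuous_interval)
  have a1: "(\<lambda>s. \<bar>f1 s\<bar>) integrable_on {0..t}" "(\<lambda>s. \<bar>f2 s\<bar>) integrable_on {0..t}"
    using assms by (auto intro!: integrable_continuous_interval continuous_intros)
  have "\<bar>integral {0..t} f1\<bar> \<le> integral {0..t} (\<lambda>s. \<bar>f1 s\<bar>)"
    using i1 a1 integral_norm_bound_integral[of f1 "{0..t}" "\<lambda>s. \<bar>f1 s\<bar>"] by auto
  moreover have "\<bar>integral {0..t} f2\<bar> \<le> integral {0..t} (\<lambda>s. \<bar>f2 s\<bar>)"
    using i1 a1 integral_norm_bound_integral[of f2 "{0..t}" "\<lambda>s. \<bar>f2 s\<bar>"] by auto
  moreover have "integral {0..t} (\<lambda>s. \<bar>f1 s\<bar>) + integral {0..t} (\<lambda>s. \<bar>f2 s\<bar>)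
      = integral {0..t} (\<lambda>s. \<bar>f1 s\<bar> + \<bar>f2 s\<bar>)"
    using a1 by (simp add: integral_add)
  moreover have "integral {0..t} (\<lambda>s. \<bar>f1 s\<bar> + \<bar>f2 s\<bar>) \<le> integral {0..t} h"
    using a1 i1 assms(4) by (intro integral_le) (auto intro: integrable_add)
  ultimately show ?thesis by linarith
qed

lemma int_poly:
  fixes L C :: real assumes "t \<ge> 0"
  shows "integral {0..t} (\<lambda>s. L * (C * (L * s) ^ m / fact m)) = C * (L * t) ^ Suc m / fact (Suc m)"
proof -
  have "((\<lambda>s. L * (C * (L * s) ^ m / fact m)) has_integral
        ((\<lambda>s. C * (L * s) ^ Suc m / fact (Suc m)) t - (\<lambda>s. C * (L * s) ^ Suc m / fact (Suc m)) 0)) {0..t}"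
  proof (rule fundamental_theorem_of_calculus)
    fix x assume "x \<in> {0..t}"
    show "((\<lambda>s. C * (L * s) ^ Suc m / fact (Suc m)) has_vector_derivative L * (C * (L * x) ^ m / fact m)) (at x within {0..t})"
      unfolding has_real_derivative_iff_has_vector_derivative[symmetric]
    proof -
      have e: "(\<lambda>s. C * (L * s) ^ Suc m / fact (Suc m)) = (\<lambda>s. (C * L ^ Suc m / fact (Suc m)) * s ^ Suc m)"
        by (simp add: power_mult_distrib field_simps)
      have D: "((\<lambda>s. (C * L ^ Suc m / fact (Suc m)) * s ^ Suc m) has_real_derivative
             (C * L ^ Suc m / fact (Suc m)) * (real (Suc m) * x ^ (Suc m - Suc 0))) (at x within {0..t})"
        by (intro DERIV_cmult DERIV_pow)
      have eq: "(C * L ^ Suc m / fact (Suc m)) * (real (Suc m) * x ^ (Suc m - Suc 0)) = L * (C * (L * x) ^ m / fact m)"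
        by (simp add: fact_Suc power_mult_distrib field_simps del: of_nat_Suc)
      show "((\<lambda>s. C * (L * s) ^ Suc m / fact (Suc m)) has_real_derivative L * (C * (L * x) ^ m / fact m)) (at x within {0..t})"
        unfolding e by (rule DERIV_cong[OF D eq])
    qed
  qed (use assms in auto)
  then show ?thesis by (rule integral_unique[THEN trans]) simp
qed

lemma int_exp:
  fixes L d :: real assumes "t \<ge> 0"
  shows "integral {0..t} (\<lambda>s. L * (d * exp (L * s))) = d * exp (L * t) - d"
proof -
  have "((\<lambda>s. L * (d * exp (L * s))) has_integral
        ((\<lambda>s. d * exp (L * s)) t - (\<lambda>s. d * exp (L * s)) 0)) {0..t}"
  proof (rule fundamental_theorem_of_calculus)
    fix x assume "x \<in> {0..t}"
    show "((\<lambda>s. d * exp (L * s)) has_vector_derivative L * (d * exp (L * x))) (at x within {0..t})"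
      unfolding has_real_derivative_iff_has_vector_derivative[symmetric]
      by (rule derivative_eq_intros refl)+ (simp add: field_simps)
  qed (use assms in auto)
  then show ?thesis by (rule integral_unique[THEN trans]) simp
qed

definition solT :: "(real \<Rightarrow> real) \<Rightarrow> real \<Rightarrow> real \<Rightarrow> real \<Rightarrow> real \<Rightarrow> real" where
  "solT G k a b t = a + (\<Sum>i. fst (pic G k a b (Suc i) t) - fst (pic G k a b i t))"

definition solP :: "(real \<Rightarrow> real) \<Rightarrow> real \<Rightarrow> real \<Rightarrow> real \<Rightarrow> real \<Rightarrow> real" where
  "solP G k a b t = b + (\<Sum>i. snd (pic G k a b (Suc i) t) - snd (pic G k a b i t))"

lemma abs3: fixes x y z :: real shows "\<bar>x + y - z\<bar> \<le> \<bar>x\<bar> + \<bar>y\<bar> + \<bar>z\<bar>"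
  by arith

lemma exp_partial: fixes x :: real assumes "0 \<le> x" shows "(\<Sum>i<n. x^i / fact i) \<le> exp x"
proof -
  have s: "summable (\<lambda>i. x^i / fact i)" using summable_exp[of x] by (simp add: divide_inverse mult.commute)
  have "(\<Sum>i<n. x^i / fact i) \<le> (\<Sum>i. x^i / fact i)" by (rule sum_le_suminf[OF s]) (use assms in auto)
  also have "\<dots> = exp x" by (simp add: exp_def divide_inverse mult.commute)
  finally show ?thesis .
qed

lemma summable_shift_exp: fixes x C :: real shows "summable (\<lambda>n. C * x ^ Suc n / fact (Suc n))"
proof -
  have "summable (\<lambda>n. inverse (fact n) * x ^ n)" by (rule summable_exp)
  then have "summable (\<lambda>n. inverse (fact (Suc n)) * x ^ Suc n)" by (subst summable_Suc_iff)
  then have "summable (\<lambda>n. C * (inverse (fact (Suc n)) * x ^ Suc n))" by (rule summable_mult)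
  then show ?thesis by (simp add: divide_inverse mult.commute mult.left_commute)
qed

lemma within_extend:
  fixes f :: "real \<Rightarrow> real"
  assumes "(f has_real_derivative D) (at x within {0..x+1})" "0 \<le> x"
  shows "(f has_real_derivative D) (at x within {0..})"
proof -
  have "at x within {0..x+1} = at x within {0..}"
    by (rule at_within_nhd[of x "{..<x+1}"]) auto
  then show ?thesis using assms by simp
qed

locale picloc =
  fixes G :: "real \<Rightarrow> real" and M :: real
  assumes M_nonneg: "0 \<le> M" and lip: "\<And>x y. \<bar>G x - G y\<bar> \<le> M * \<bar>x - y\<bar>"
begin

lemma G_cont: "continuous_on UNIV G"
proof (rule lipschitz_on_continuous_on)
  show "M-lipschitz_on UNIV G"
    using lip M_nonneg by (intro lipschitz_onI) (auto simp: dist_real_def)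
qed

lemma G_cont': "continuous_on S (\<lambda>x. G (f x))" if "continuous_on S f"
  using continuous_on_compose2[OF G_cont that] by auto

lemma pic_cont: "continuous_on {0..T} (\<lambda>t. fst (pic G k a b n t)) \<and> continuous_on {0..T} (\<lambda>t. snd (pic G k a b n t))"
proof (induction n arbitrary: T)
  case 0
  then show ?case by simp
next
  case (Suc n)
  have c1: "continuous_on {0..T} (\<lambda>s. snd (pic G k a b n s))"
    and c0: "continuous_on {0..T} (\<lambda>s. fst (pic G k a b n s))"
    using Suc by blast+
  have c2: "continuous_on {0..T} (\<lambda>s. k * snd (pic G k a b n s) - G (fst (pic G k a b n s)))"
    by (intro continuous_on_diff continuous_on_mult_left c1 G_cont' c0)
  show ?case
    using indefinite_integral_continuous_1[OF integrable_continuous_interval[OF c1]]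
      indefinite_integral_continuous_1[OF integrable_continuous_interval[OF c2]]
    by (auto simp: pic.simps(2) intro!: continuous_intros)
qed

lemma pic_int:
  fixes f g :: "real \<Rightarrow> real"
  assumes "continuous_on {0..t} f" "continuous_on {0..t} g"
  shows "integral {0..t} f - integral {0..t} g = integral {0..t} (\<lambda>s. f s - g s)"
  using assms by (simp add: integral_diff integrable_continuous_interval)

lemma diff_bound:
  assumes L: "0 < L" "1 + \<bar>k\<bar> \<le> L" "M \<le> L" and t: "0 \<le> t"
  shows "\<bar>fst (pic G k a b (Suc n) t) - fst (pic G k a b n t)\<bar> + \<bar>snd (pic G k a b (Suc n) t) - snd (pic G k a b n t)\<bar>
     \<le> ((\<bar>b\<bar> + \<bar>k*b - G a\<bar>)/L) * (L*t)^(Suc n) / fact (Suc n)"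
  using t
proof (induction n arbitrary: t)
  case 0
  have h: "\<bar>b * (k * t) - t * G a\<bar> = t * \<bar>b * k - G a\<bar>"
  proof -
    have "b * (k * t) - t * G a = t * (b * k - G a)" by (simp add: algebra_simps)
    then show ?thesis using 0 by (simp add: abs_mult)
  qed
  from 0 show ?case using L h by (simp add: pic.simps(2) abs_mult field_simps)
next
  case (Suc n)
  define C0 where "C0 = (\<bar>b\<bar> + \<bar>k*b - G a\<bar>)/L"
  let ?P' = "pic G k a b (Suc n)" and ?P = "pic G k a b n"
  have cP': "continuous_on {0..t} (\<lambda>s. fst (?P' s))" "continuous_on {0..t} (\<lambda>s. snd (?P' s))"
    and cP: "continuous_on {0..t} (\<lambda>s. fst (?P s))" "continuous_on {0..t} (\<lambda>s. snd (?P s))"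
    using pic_cont by blast+
  have q1: "fst (pic G k a b (Suc (Suc n)) t) = a + integral {0..t} (\<lambda>s. snd (?P' s))"
    by (simp only: pic.simps(2)[of G k a b "Suc n"] fst_conv)
  have q2: "fst (?P' t) = a + integral {0..t} (\<lambda>s. snd (?P s))"
    by (simp only: pic.simps(2)[of G k a b n] fst_conv)
  have q3: "snd (pic G k a b (Suc (Suc n)) t) = b + integral {0..t} (\<lambda>s. k * snd (?P' s) - G (fst (?P' s)))"
    by (simp only: pic.simps(2)[of G k a b "Suc n"] snd_conv)
  have q4: "snd (?P' t) = b + integral {0..t} (\<lambda>s. k * snd (?P s) - G (fst (?P s)))"
    by (simp only: pic.simps(2)[of G k a b n] snd_conv)
  have cf': "continuous_on {0..t} (\<lambda>s. k * snd (?P' s) - G (fst (?P' s)))"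
    by (intro continuous_on_diff continuous_on_mult_left cP' G_cont')
  have cf: "continuous_on {0..t} (\<lambda>s. k * snd (?P s) - G (fst (?P s)))"
    by (intro continuous_on_diff continuous_on_mult_left cP G_cont')
  have e1: "fst (pic G k a b (Suc (Suc n)) t) - fst (?P' t) = integral {0..t} (\<lambda>s. snd (?P' s) - snd (?P s))"
    using pic_int[OF cP'(2) cP(2)] q1 q2 by linarith
  have e2: "snd (pic G k a b (Suc (Suc n)) t) - snd (?P' t) = integral {0..t}
      (\<lambda>s. (k * snd (?P' s) - G (fst (?P' s))) - (k * snd (?P s) - G (fst (?P s))))"
    using pic_int[OF cf' cf] q3 q4 by linarith
  have "\<bar>integral {0..t} (\<lambda>s. snd (?P' s) - snd (?P s))\<bar> + \<bar>integral {0..t}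
      (\<lambda>s. (k * snd (?P' s) - G (fst (?P' s))) - (k * snd (?P s) - G (fst (?P s))))\<bar>
      \<le> integral {0..t} (\<lambda>s. L * (C0 * (L * s) ^ Suc n / fact (Suc n)))"
  proof (rule int_two_bound)
    show "continuous_on {0..t} (\<lambda>s. snd (?P' s) - snd (?P s))"
      by (intro continuous_on_diff cP' cP)
    show "continuous_on {0..t} (\<lambda>s. (k * snd (?P' s) - G (fst (?P' s))) - (k * snd (?P s) - G (fst (?P s))))"
      by (intro continuous_on_diff continuous_on_mult_left cP' cP G_cont')
    show "continuous_on {0..t} (\<lambda>s. L * (C0 * (L * s) ^ Suc n / fact (Suc n)))"
      by (intro continuous_intros) auto
    fix s assume s: "s \<in> {0..t}"
    have IH: "\<bar>fst (?P' s) - fst (?P s)\<bar> + \<bar>snd (?P' s) - snd (?P s)\<bar> \<le> C0 * (L * s) ^ Suc n / fact (Suc n)"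
      using Suc.IH[of s] s unfolding C0_def by auto
    have g: "\<bar>G (fst (?P' s)) - G (fst (?P s))\<bar> \<le> M * \<bar>fst (?P' s) - fst (?P s)\<bar>" by (rule lip)
    have "\<bar>(k * snd (?P' s) - G (fst (?P' s))) - (k * snd (?P s) - G (fst (?P s)))\<bar>
        \<le> \<bar>k\<bar> * \<bar>snd (?P' s) - snd (?P s)\<bar> + \<bar>G (fst (?P' s)) - G (fst (?P s))\<bar>"
      by (simp add: abs_mult[symmetric] right_diff_distrib abs_triangle_ineq4)
    hence "\<bar>snd (?P' s) - snd (?P s)\<bar> + \<bar>(k * snd (?P' s) - G (fst (?P' s))) - (k * snd (?P s) - G (fst (?P s)))\<bar>
        \<le> (1 + \<bar>k\<bar>) * \<bar>snd (?P' s) - snd (?P s)\<bar> + M * \<bar>fst (?P' s) - fst (?P s)\<bar>"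
      using g by (simp add: algebra_simps)
    also have "\<dots> \<le> L * \<bar>snd (?P' s) - snd (?P s)\<bar> + L * \<bar>fst (?P' s) - fst (?P s)\<bar>"
      using L by (intro add_mono mult_right_mono) auto
    also have "\<dots> \<le> L * (C0 * (L * s) ^ Suc n / fact (Suc n))"
    proof -
      have "L * (\<bar>fst (?P' s) - fst (?P s)\<bar> + \<bar>snd (?P' s) - snd (?P s)\<bar>) \<le> L * (C0 * (L * s) ^ Suc n / fact (Suc n))"
        by (rule mult_left_mono[OF IH]) (use L in simp)
      then show ?thesis by (simp only: distrib_left)
    qed
    finally show "\<bar>snd (?P' s) - snd (?P s)\<bar> + \<bar>(k * snd (?P' s) - G (fst (?P' s))) - (k * snd (?P s) - G (fst (?P s)))\<bar>
        \<le> L * (C0 * (L * s) ^ Suc n / fact (Suc n))" .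
  qed
  also have "\<dots> = C0 * (L * t) ^ Suc (Suc n) / fact (Suc (Suc n))"
    by (rule int_poly) (use Suc.prems in auto)
  finally show ?case unfolding e1 e2 C0_def .
qed

lemma Lprops: "0 < 1 + \<bar>k\<bar> + M" "1 + \<bar>k\<bar> \<le> 1 + \<bar>k\<bar> + M" "M \<le> 1 + \<bar>k\<bar> + M"
  using M_nonneg by auto

lemma diff_bound_T:
  assumes "t \<in> {0..T}"
  shows "\<bar>fst (pic G k a b (Suc n) t) - fst (pic G k a b n t)\<bar> + \<bar>snd (pic G k a b (Suc n) t) - snd (pic G k a b n t)\<bar>
     \<le> ((\<bar>b\<bar> + \<bar>k*b - G a\<bar>)/(1 + \<bar>k\<bar> + M)) * ((1 + \<bar>k\<bar> + M)*T)^(Suc n) / fact (Suc n)"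
proof -
  let ?L = "1 + \<bar>k\<bar> + M"
  have "((\<bar>b\<bar> + \<bar>k*b - G a\<bar>)/?L) * (?L*t)^(Suc n) / fact (Suc n) \<le> ((\<bar>b\<bar> + \<bar>k*b - G a\<bar>)/?L) * (?L*T)^(Suc n) / fact (Suc n)"
    using assms Lprops(1)[of k] M_nonneg
    by (intro divide_right_mono mult_left_mono power_mono) auto
  moreover have "\<bar>fst (pic G k a b (Suc n) t) - fst (pic G k a b n t)\<bar> + \<bar>snd (pic G k a b (Suc n) t) - snd (pic G k a b n t)\<bar>
     \<le> ((\<bar>b\<bar> + \<bar>k*b - G a\<bar>)/?L) * (?L*t)^(Suc n) / fact (Suc n)"
    by (rule diff_bound[OF Lprops[of k]]) (use assms in auto)
  ultimately show ?thesis by linarith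
qed

lemma unif_fst:
  "uniform_limit {0..T} (\<lambda>n t. fst (pic G k a b n t)) (solT G k a b) sequentially"
proof -
  let ?L = "1 + \<bar>k\<bar> + M"
  let ?C = "(\<bar>b\<bar> + \<bar>k*b - G a\<bar>)/?L"
  have "uniform_limit {0..T} (\<lambda>n t. \<Sum>i<n. fst (pic G k a b (Suc i) t) - fst (pic G k a b i t))
      (\<lambda>t. \<Sum>i. fst (pic G k a b (Suc i) t) - fst (pic G k a b i t)) sequentially"
  proof (rule Weierstrass_m_test)
    fix i t assume t: "t \<in> {0..T}"
    show "norm (fst (pic G k a b (Suc i) t) - fst (pic G k a b i t)) \<le> ?C * (?L*T)^(Suc i) / fact (Suc i)"
      using diff_bound_T[OF t, where n=i and k=k and a=a and b=b] abs_ge_zero[of "snd (pic G k a b (Suc i) t) - snd (pic G k a b i t)"]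
      unfolding real_norm_def by linarith
  qed (rule summable_shift_exp)
  then have "uniform_limit {0..T} (\<lambda>n t. a + (\<Sum>i<n. fst (pic G k a b (Suc i) t) - fst (pic G k a b i t)))
      (\<lambda>t. a + (\<Sum>i. fst (pic G k a b (Suc i) t) - fst (pic G k a b i t))) sequentially"
    by (intro uniform_limit_add uniform_limit_const)
  then show ?thesis
    by (subst (asm) uniform_limit_cong'[where g="\<lambda>n t. fst (pic G k a b n t)" and i="solT G k a b"])
       (auto simp: sum_lessThan_telescope[of "\<lambda>i. fst (pic G k a b i _)"] solT_def)
qed

lemma unif_snd:
  "uniform_limit {0..T} (\<lambda>n t. snd (pic G k a b n t)) (solP G k a b) sequentially"
proof -
  let ?L = "1 + \<bar>k\<bar> + M"
  let ?C = "(\<bar>b\<bar> + \<bar>k*b - G a\<bar>)/?L"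
  have "uniform_limit {0..T} (\<lambda>n t. \<Sum>i<n. snd (pic G k a b (Suc i) t) - snd (pic G k a b i t))
      (\<lambda>t. \<Sum>i. snd (pic G k a b (Suc i) t) - snd (pic G k a b i t)) sequentially"
  proof (rule Weierstrass_m_test)
    fix i t assume t: "t \<in> {0..T}"
    show "norm (snd (pic G k a b (Suc i) t) - snd (pic G k a b i t)) \<le> ?C * (?L*T)^(Suc i) / fact (Suc i)"
      using diff_bound_T[OF t, where n=i and k=k and a=a and b=b] abs_ge_zero[of "fst (pic G k a b (Suc i) t) - fst (pic G k a b i t)"]
      unfolding real_norm_def by linarith
  qed (rule summable_shift_exp)
  then have "uniform_limit {0..T} (\<lambda>n t. b + (\<Sum>i<n. snd (pic G k a b (Suc i) t) - snd (pic G k a b i t)))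
      (\<lambda>t. b + (\<Sum>i. snd (pic G k a b (Suc i) t) - snd (pic G k a b i t))) sequentially"
    by (intro uniform_limit_add uniform_limit_const)
  then show ?thesis
    by (subst (asm) uniform_limit_cong'[where g="\<lambda>n t. snd (pic G k a b n t)" and i="solP G k a b"])
       (auto simp: sum_lessThan_telescope[of "\<lambda>i. snd (pic G k a b i _)"] solP_def)
qed

lemma unif_rhs:
  "uniform_limit {0..T} (\<lambda>n t. k * snd (pic G k a b n t) - G (fst (pic G k a b n t)))
     (\<lambda>t. k * solP G k a b t - G (solT G k a b t)) sequentially"
proof (rule uniform_limitI)
  fix e :: real assume e: "0 < e"
  have e1: "0 < e / (3 * (\<bar>k\<bar> + 1))" "0 < e / (3 * (M + 1))" using e M_nonneg by auto
  show "\<forall>\<^sub>F n in sequentially. \<forall>t\<in>{0..T}. dist (k * snd (pic G k a b n t) - G (fst (pic G k a b n t)))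
          (k * solP G k a b t - G (solT G k a b t)) < e"
    using uniform_limitD[OF unif_snd[where T=T and k=k and a=a and b=b] e1(1)] uniform_limitD[OF unif_fst[where T=T and k=k and a=a and b=b] e1(2)]
  proof eventually_elim
    case (elim n)
    show ?case
    proof
      fix t assume t: "t \<in> {0..T}"
      have d1: "\<bar>snd (pic G k a b n t) - solP G k a b t\<bar> < e / (3 * (\<bar>k\<bar> + 1))"
        using elim t by (auto simp: dist_real_def)
      have d2: "\<bar>fst (pic G k a b n t) - solT G k a b t\<bar> < e / (3 * (M + 1))"
        using elim t by (auto simp: dist_real_def)
      have "\<bar>k\<bar> * \<bar>snd (pic G k a b n t) - solP G k a b t\<bar> \<le> (\<bar>k\<bar> + 1) * (e / (3 * (\<bar>k\<bar> + 1)))"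
        using d1 by (intro mult_mono) auto
      also have "\<dots> = e / 3" using abs_ge_zero[of k] by (simp add: field_simps)
      finally have h1: "\<bar>k\<bar> * \<bar>snd (pic G k a b n t) - solP G k a b t\<bar> \<le> e / 3" .
      have "M * \<bar>fst (pic G k a b n t) - solT G k a b t\<bar> \<le> (M + 1) * (e / (3 * (M + 1)))"
        using d2 M_nonneg by (intro mult_mono) auto
      also have "\<dots> = e / 3" using M_nonneg by (simp add: field_simps)
      finally have h2: "M * \<bar>fst (pic G k a b n t) - solT G k a b t\<bar> \<le> e / 3" .
      have h3: "\<bar>G (fst (pic G k a b n t)) - G (solT G k a b t)\<bar> \<le> M * \<bar>fst (pic G k a b n t) - solT G k a b t\<bar>"
        by (rule lip)
      have "\<bar>(k * snd (pic G k a b n t) - G (fst (pic G k a b n t))) - (k * solP G k a b t - G (solT G k a b t))\<bar>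
          \<le> \<bar>k\<bar> * \<bar>snd (pic G k a b n t) - solP G k a b t\<bar> + \<bar>G (fst (pic G k a b n t)) - G (solT G k a b t)\<bar>"
        by (simp add: abs_mult[symmetric] right_diff_distrib abs_triangle_ineq4)
      show "dist (k * snd (pic G k a b n t) - G (fst (pic G k a b n t))) (k * solP G k a b t - G (solT G k a b t)) < e"
        unfolding dist_real_def
        using h1 h2 h3 \<open>\<bar>(k * snd (pic G k a b n t) - G (fst (pic G k a b n t))) - (k * solP G k a b t - G (solT G k a b t))\<bar>
          \<le> \<bar>k\<bar> * \<bar>snd (pic G k a b n t) - solP G k a b t\<bar> + \<bar>G (fst (pic G k a b n t)) - G (solT G k a b t)\<bar>\<close>
        using e by linarith
    qed
  qed
qed

lemma sol_contT: "continuous_on {0..T} (solT G k a b)"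
  by (rule uniform_limit_theorem[OF _ unif_fst]) (use pic_cont in auto)

lemma sol_contP: "continuous_on {0..T} (solP G k a b)"
  by (rule uniform_limit_theorem[OF _ unif_snd]) (use pic_cont in auto)

lemma sol_eqT:
  assumes t: "0 \<le> t"
  shows "solT G k a b t = a + integral {0..t} (solP G k a b)"
proof -
  have l1: "(\<lambda>n. fst (pic G k a b n t)) \<longlonglongrightarrow> solT G k a b t"
    by (rule tendsto_uniform_limitI[OF unif_fst[where T=t]]) (use t in auto)
  then have l1': "(\<lambda>n. fst (pic G k a b (Suc n) t)) \<longlonglongrightarrow> solT G k a b t"
    by (rule LIMSEQ_Suc)
  obtain I J where I: "\<And>n. ((\<lambda>s. snd (pic G k a b n s)) has_integral I n) {0..t}"
      and J: "(solP G k a b has_integral J) {0..t}" and IJ: "I \<longlonglongrightarrow> J"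
    by (rule uniform_limit_integral[OF unif_snd[where T=t]]) (use pic_cont in auto)
  have e: "fst (pic G k a b (Suc n) t) = a + I n" for n
    using integral_unique[OF I[of n]] by (simp add: pic.simps(2))
  have "(\<lambda>n. a + I n) \<longlonglongrightarrow> a + J" by (intro tendsto_intros IJ)
  moreover have "(\<lambda>n. a + I n) \<longlonglongrightarrow> solT G k a b t" using l1' unfolding e .
  ultimately have "solT G k a b t = a + J" using LIMSEQ_unique by blast
  then show ?thesis using integral_unique[OF J] by simp
qed

lemma sol_eqP:
  assumes t: "0 \<le> t"
  shows "solP G k a b t = b + integral {0..t} (\<lambda>s. k * solP G k a b s - G (solT G k a b s))"
proof -
  have l1: "(\<lambda>n. snd (pic G k a b n t)) \<longlonglongrightarrow> solP G k a b t"
    by (rule tendsto_uniform_limitI[OF unif_snd[where T=t]]) (use t in auto)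
  then have l1': "(\<lambda>n. snd (pic G k a b (Suc n) t)) \<longlonglongrightarrow> solP G k a b t"
    by (rule LIMSEQ_Suc)
  have c: "continuous_on {0..t} (\<lambda>s. k * snd (pic G k a b n s) - G (fst (pic G k a b n s)))" for n
    using pic_cont by (intro continuous_on_diff continuous_on_mult_left G_cont') blast+
  obtain I J where I: "\<And>n. ((\<lambda>s. k * snd (pic G k a b n s) - G (fst (pic G k a b n s))) has_integral I n) {0..t}"
      and J: "((\<lambda>s. k * solP G k a b s - G (solT G k a b s)) has_integral J) {0..t}" and IJ: "I \<longlonglongrightarrow> J"
    by (rule uniform_limit_integral[OF unif_rhs[where T=t]]) (use c in auto)
  have e: "snd (pic G k a b (Suc n) t) = b + I n" for n
    using integral_unique[OF I[of n]] by (simp add: pic.simps(2))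
  have "(\<lambda>n. b + I n) \<longlonglongrightarrow> b + J" by (intro tendsto_intros IJ)
  moreover have "(\<lambda>n. b + I n) \<longlonglongrightarrow> solP G k a b t" using l1' unfolding e .
  ultimately have "solP G k a b t = b + J" using LIMSEQ_unique by blast
  then show ?thesis using integral_unique[OF J] by simp
qed

lemma sol0: "solT G k a b 0 = a" "solP G k a b 0 = b"
  using sol_eqT[of 0] sol_eqP[of 0] by auto

lemma solT_deriv:
  assumes x: "0 \<le> x"
  shows "(solT G k a b has_real_derivative solP G k a b x) (at x within {0..})"
proof -
  have "((\<lambda>u. integral {0..u} (solP G k a b)) has_real_derivative solP G k a b x) (at x within {0..x+1})"
    by (rule integral_has_real_derivative[OF sol_contP]) (use x in auto)
  then have "((\<lambda>u. a + integral {0..u} (solP G k a b)) has_real_derivative solP G k a b x) (at x within {0..x+1})"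
    using DERIV_add[OF DERIV_const] by fastforce
  then have "(solT G k a b has_real_derivative solP G k a b x) (at x within {0..x+1})"
    by (rule has_field_derivative_transform_within[where d=1]) (use x sol_eqT in auto)
  then show ?thesis using within_extend x by blast
qed

lemma solP_deriv:
  assumes x: "0 \<le> x"
  shows "(solP G k a b has_real_derivative (k * solP G k a b x - G (solT G k a b x))) (at x within {0..})"
proof -
  have c: "continuous_on {0..x+1} (\<lambda>s. k * solP G k a b s - G (solT G k a b s))"
    by (intro continuous_on_diff continuous_on_mult_left G_cont' sol_contP sol_contT)
  have "((\<lambda>u. integral {0..u} (\<lambda>s. k * solP G k a b s - G (solT G k a b s))) has_real_derivative
        (k * solP G k a b x - G (solT G k a b x))) (at x within {0..x+1})"
    by (rule integral_has_real_derivative[OF c]) (use x in auto)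
  then have "((\<lambda>u. b + integral {0..u} (\<lambda>s. k * solP G k a b s - G (solT G k a b s))) has_real_derivative
        (k * solP G k a b x - G (solT G k a b x))) (at x within {0..x+1})"
    using DERIV_add[OF DERIV_const] by fastforce
  then have "(solP G k a b has_real_derivative (k * solP G k a b x - G (solT G k a b x))) (at x within {0..x+1})"
    by (rule has_field_derivative_transform_within[where d=1]) (use x sol_eqP in auto)
  then show ?thesis using within_extend x by blast
qed

lemma pbound:
  assumes t: "t \<in> {0..T}"
  shows "\<bar>snd (pic G k a b n t)\<bar> \<le> \<bar>b\<bar> + ((\<bar>b\<bar> + \<bar>k*b - G a\<bar>)/(1 + \<bar>k\<bar> + M)) * exp ((1 + \<bar>k\<bar> + M) * T)"
proof -
  let ?L = "1 + \<bar>k\<bar> + M"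
  let ?C = "(\<bar>b\<bar> + \<bar>k*b - G a\<bar>)/?L"
  let ?x = "?L * T"
  have C0: "0 \<le> ?C" using Lprops(1)[of k] by auto
  have x0: "0 \<le> ?x" using Lprops(1)[of k] t by auto
  have tel: "snd (pic G k a b n t) - b = (\<Sum>i<n. snd (pic G k a b (Suc i) t) - snd (pic G k a b i t))"
    using sum_lessThan_telescope[of "\<lambda>i. snd (pic G k a b i t)" n] by simp
  have "\<bar>\<Sum>i<n. snd (pic G k a b (Suc i) t) - snd (pic G k a b i t)\<bar> \<le> (\<Sum>i<n. \<bar>snd (pic G k a b (Suc i) t) - snd (pic G k a b i t)\<bar>)"
    by (rule sum_abs)
  also have "\<dots> \<le> (\<Sum>i<n. ?C * ?x ^ Suc i / fact (Suc i))"
  proof (rule sum_mono)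
    fix i assume "i \<in> {..<n}"
    show "\<bar>snd (pic G k a b (Suc i) t) - snd (pic G k a b i t)\<bar> \<le> ?C * ?x ^ Suc i / fact (Suc i)"
      using diff_bound_T[OF t, where n=i and k=k and a=a and b=b] abs_ge_zero[of "fst (pic G k a b (Suc i) t) - fst (pic G k a b i t)"]
      by linarith
  qed
  also have "\<dots> = ?C * (\<Sum>i<n. ?x ^ Suc i / fact (Suc i))"
    by (simp add: sum_distrib_left)
  also have "\<dots> \<le> ?C * exp ?x"
  proof (rule mult_left_mono[OF _ C0])
    have "(\<Sum>i<n. ?x ^ Suc i / fact (Suc i)) \<le> (\<Sum>i<Suc n. ?x ^ i / fact i)"
      by (subst sum.lessThan_Suc_shift) simp
    also have "\<dots> \<le> exp ?x" by (rule exp_partial[OF x0])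
    finally show "(\<Sum>i<n. ?x ^ Suc i / fact (Suc i)) \<le> exp ?x" .
  qed
  finally show ?thesis using tel by linarith
qed

lemma dep_bound:
  assumes L: "1 + \<bar>k'\<bar> \<le> L" "M \<le> L"
    and C: "\<And>n s. s \<in> {0..T} \<Longrightarrow> \<bar>snd (pic G k a b n s)\<bar> \<le> C"
    and t: "t \<in> {0..T}"
  shows "\<bar>fst (pic G k a b n t) - fst (pic G k' a' b' n t)\<bar> + \<bar>snd (pic G k a b n t) - snd (pic G k' a' b' n t)\<bar>
     \<le> (\<bar>a - a'\<bar> + \<bar>b - b'\<bar> + \<bar>k - k'\<bar> * C * T) * exp (L * t)"
  using t
proof (induction n arbitrary: t)
  case 0
  have C0: "0 \<le> C" using C[of 0 0] 0 by auto
  have T0: "0 \<le> T" using 0 by auto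
  have L0: "0 \<le> L" using L by auto
  have "\<bar>a - a'\<bar> + \<bar>b - b'\<bar> \<le> (\<bar>a - a'\<bar> + \<bar>b - b'\<bar> + \<bar>k - k'\<bar> * C * T) * 1"
    using C0 T0 by simp
  also have "\<dots> \<le> (\<bar>a - a'\<bar> + \<bar>b - b'\<bar> + \<bar>k - k'\<bar> * C * T) * exp (L * t)"
    using C0 T0 L0 0 by (intro mult_left_mono) auto
  finally show ?case by simp
next
  case (Suc n)
  define d where "d = \<bar>a - a'\<bar> + \<bar>b - b'\<bar> + \<bar>k - k'\<bar> * C * T"
  have C0: "0 \<le> C" using C[of 0 0] Suc.prems by auto
  have T0: "0 \<le> T" "t \<le> T" "0 \<le> t" using Suc.prems by auto
  have d0: "0 \<le> d" unfolding d_def using C0 T0 by auto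
  let ?P = "pic G k a b n" and ?Q = "pic G k' a' b' n"
  have cP: "continuous_on {0..t} (\<lambda>s. fst (?P s))" "continuous_on {0..t} (\<lambda>s. snd (?P s))"
    and cQ: "continuous_on {0..t} (\<lambda>s. fst (?Q s))" "continuous_on {0..t} (\<lambda>s. snd (?Q s))"
    using pic_cont by blast+
  have cf: "continuous_on {0..t} (\<lambda>s. k * snd (?P s) - G (fst (?P s)))"
    by (intro continuous_on_diff continuous_on_mult_left cP G_cont')
  have cg: "continuous_on {0..t} (\<lambda>s. k' * snd (?Q s) - G (fst (?Q s)))"
    by (intro continuous_on_diff continuous_on_mult_left cQ G_cont')
  have q1: "fst (pic G k a b (Suc n) t) - fst (pic G k' a' b' (Suc n) t) = (a - a') + integral {0..t} (\<lambda>s. snd (?P s) - snd (?Q s))"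
    using pic_int[OF cP(2) cQ(2)] by (simp add: pic.simps(2))
  have q2: "snd (pic G k a b (Suc n) t) - snd (pic G k' a' b' (Suc n) t) = (b - b') + integral {0..t}
       (\<lambda>s. (k * snd (?P s) - G (fst (?P s))) - (k' * snd (?Q s) - G (fst (?Q s))))"
    using pic_int[OF cf cg] by (simp add: pic.simps(2))
  have main: "\<bar>integral {0..t} (\<lambda>s. snd (?P s) - snd (?Q s))\<bar> + \<bar>integral {0..t}
       (\<lambda>s. (k * snd (?P s) - G (fst (?P s))) - (k' * snd (?Q s) - G (fst (?Q s))))\<bar>
      \<le> integral {0..t} (\<lambda>s. \<bar>k - k'\<bar> * C + L * (d * exp (L * s)))"
  proof (rule int_two_bound)
    show "continuous_on {0..t} (\<lambda>s. snd (?P s) - snd (?Q s))" by (intro continuous_on_diff cP cQ)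
    show "continuous_on {0..t} (\<lambda>s. (k * snd (?P s) - G (fst (?P s))) - (k' * snd (?Q s) - G (fst (?Q s))))"
      by (intro continuous_on_diff cf cg)
    show "continuous_on {0..t} (\<lambda>s. \<bar>k - k'\<bar> * C + L * (d * exp (L * s)))"
      by (intro continuous_intros)
    fix s assume s: "s \<in> {0..t}"
    have sT: "s \<in> {0..T}" using s T0 by auto
    have IH: "\<bar>fst (?P s) - fst (?Q s)\<bar> + \<bar>snd (?P s) - snd (?Q s)\<bar> \<le> d * exp (L * s)"
      using Suc.IH[OF sT] unfolding d_def .
    have g: "\<bar>G (fst (?P s)) - G (fst (?Q s))\<bar> \<le> M * \<bar>fst (?P s) - fst (?Q s)\<bar>" by (rule lip)
    have Cs: "\<bar>snd (?P s)\<bar> \<le> C" by (rule C[OF sT])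
    have e1: "(k * snd (?P s) - G (fst (?P s))) - (k' * snd (?Q s) - G (fst (?Q s)))
        = (k - k') * snd (?P s) + k' * (snd (?P s) - snd (?Q s)) - (G (fst (?P s)) - G (fst (?Q s)))"
      by (simp add: algebra_simps)
    have "\<bar>(k * snd (?P s) - G (fst (?P s))) - (k' * snd (?Q s) - G (fst (?Q s)))\<bar>
        \<le> \<bar>k - k'\<bar> * \<bar>snd (?P s)\<bar> + \<bar>k'\<bar> * \<bar>snd (?P s) - snd (?Q s)\<bar> + \<bar>G (fst (?P s)) - G (fst (?Q s))\<bar>"
      unfolding e1 abs_mult[symmetric] by (rule abs3)
    also have "\<dots> \<le> \<bar>k - k'\<bar> * C + \<bar>k'\<bar> * \<bar>snd (?P s) - snd (?Q s)\<bar> + M * \<bar>fst (?P s) - fst (?Q s)\<bar>"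
      using g Cs by (intro add_mono mult_left_mono) auto
    finally have h: "\<bar>(k * snd (?P s) - G (fst (?P s))) - (k' * snd (?Q s) - G (fst (?Q s)))\<bar>
        \<le> \<bar>k - k'\<bar> * C + \<bar>k'\<bar> * \<bar>snd (?P s) - snd (?Q s)\<bar> + M * \<bar>fst (?P s) - fst (?Q s)\<bar>" .
    have "\<bar>snd (?P s) - snd (?Q s)\<bar> + \<bar>k'\<bar> * \<bar>snd (?P s) - snd (?Q s)\<bar> + M * \<bar>fst (?P s) - fst (?Q s)\<bar>
        \<le> L * \<bar>snd (?P s) - snd (?Q s)\<bar> + L * \<bar>fst (?P s) - fst (?Q s)\<bar>"
    proof -
      have "(1 + \<bar>k'\<bar>) * \<bar>snd (?P s) - snd (?Q s)\<bar> \<le> L * \<bar>snd (?P s) - snd (?Q s)\<bar>"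
        using L by (intro mult_right_mono) auto
      moreover have "M * \<bar>fst (?P s) - fst (?Q s)\<bar> \<le> L * \<bar>fst (?P s) - fst (?Q s)\<bar>"
        using L by (intro mult_right_mono) auto
      ultimately show ?thesis by (simp add: algebra_simps)
    qed
    also have "\<dots> \<le> L * (d * exp (L * s))"
    proof -
      have "L * (\<bar>fst (?P s) - fst (?Q s)\<bar> + \<bar>snd (?P s) - snd (?Q s)\<bar>) \<le> L * (d * exp (L * s))"
        by (rule mult_left_mono[OF IH]) (use L M_nonneg in simp)
      then show ?thesis by (simp only: distrib_left add.commute)
    qed
    finally show "\<bar>snd (?P s) - snd (?Q s)\<bar> + \<bar>(k * snd (?P s) - G (fst (?P s))) - (k' * snd (?Q s) - G (fst (?Q s)))\<bar>
        \<le> \<bar>k - k'\<bar> * C + L * (d * exp (L * s))" using h by linarith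
  qed
  have ie: "integral {0..t} (\<lambda>s. \<bar>k - k'\<bar> * C + L * (d * exp (L * s))) = \<bar>k - k'\<bar> * C * t + (d * exp (L * t) - d)"
  proof -
    have "integral {0..t} (\<lambda>s. \<bar>k - k'\<bar> * C + L * (d * exp (L * s))) =
        integral {0..t} (\<lambda>s. \<bar>k - k'\<bar> * C) + integral {0..t} (\<lambda>s. L * (d * exp (L * s)))"
      by (rule integral_add) (auto intro!: integrable_continuous_interval continuous_intros)
    also have "\<dots> = \<bar>k - k'\<bar> * C * t + (d * exp (L * t) - d)"
      using int_exp[OF T0(3), of L d] T0 by simp
    finally show ?thesis .
  qed
  have "\<bar>k - k'\<bar> * C * t \<le> \<bar>k - k'\<bar> * C * T"
    using T0 C0 by (intro mult_left_mono) auto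
  then have "\<bar>a - a'\<bar> + \<bar>b - b'\<bar> + \<bar>k - k'\<bar> * C * t \<le> d" unfolding d_def by linarith
  moreover have "\<bar>(a - a') + integral {0..t} (\<lambda>s. snd (?P s) - snd (?Q s))\<bar> \<le> \<bar>a - a'\<bar> + \<bar>integral {0..t} (\<lambda>s. snd (?P s) - snd (?Q s))\<bar>"
    by (rule abs_triangle_ineq)
  moreover have "\<bar>(b - b') + integral {0..t} (\<lambda>s. (k * snd (?P s) - G (fst (?P s))) - (k' * snd (?Q s) - G (fst (?Q s))))\<bar>
     \<le> \<bar>b - b'\<bar> + \<bar>integral {0..t} (\<lambda>s. (k * snd (?P s) - G (fst (?P s))) - (k' * snd (?Q s) - G (fst (?Q s))))\<bar>"
    by (rule abs_triangle_ineq)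
  ultimately show ?case unfolding q1 q2 d_def[symmetric] using main ie
    by linarith
qed

lemma sol_dep:
  assumes L: "1 + \<bar>k'\<bar> \<le> L" "M \<le> L" and t: "0 \<le> t"
  shows "\<bar>solT G k a b t - solT G k' a' b' t\<bar> + \<bar>solP G k a b t - solP G k' a' b' t\<bar>
     \<le> (\<bar>a - a'\<bar> + \<bar>b - b'\<bar> + \<bar>k - k'\<bar> * (\<bar>b\<bar> + ((\<bar>b\<bar> + \<bar>k*b - G a\<bar>)/(1 + \<bar>k\<bar> + M)) * exp ((1 + \<bar>k\<bar> + M) * t)) * t) * exp (L * t)"
    (is "?l \<le> ?r")
proof -
  let ?C = "\<bar>b\<bar> + ((\<bar>b\<bar> + \<bar>k*b - G a\<bar>)/(1 + \<bar>k\<bar> + M)) * exp ((1 + \<bar>k\<bar> + M) * t)"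
  have tt: "t \<in> {0..t}" using t by auto
  have b: "\<bar>fst (pic G k a b n t) - fst (pic G k' a' b' n t)\<bar> + \<bar>snd (pic G k a b n t) - snd (pic G k' a' b' n t)\<bar> \<le> ?r" for n
    by (rule dep_bound[OF L _ tt]) (rule pbound)
  have "(\<lambda>n. \<bar>fst (pic G k a b n t) - fst (pic G k' a' b' n t)\<bar> + \<bar>snd (pic G k a b n t) - snd (pic G k' a' b' n t)\<bar>) \<longlonglongrightarrow> ?l"
    by (intro tendsto_intros tendsto_uniform_limitI[OF unif_fst[where T=t]] tendsto_uniform_limitI[OF unif_snd[where T=t]] tt)
  then show ?thesis using b by (intro tendsto_le[OF _ tendsto_const]) auto
qed

lemma param_cont:
  fixes kf af bf :: "real \<Rightarrow> real"
  assumes ck: "continuous_on S kf" and ca: "continuous_on S af" and cb: "continuous_on S bf"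
    and L: "\<And>c. c \<in> S \<Longrightarrow> 1 + \<bar>kf c\<bar> \<le> L" "M \<le> L" and t: "0 \<le> t"
  shows "continuous_on S (\<lambda>c. solT G (kf c) (af c) (bf c) t) \<and> continuous_on S (\<lambda>c. solP G (kf c) (af c) (bf c) t)"
proof -
  have "((\<lambda>c'. solT G (kf c') (af c') (bf c') t) \<longlongrightarrow> solT G (kf c) (af c) (bf c) t) (at c within S) \<and>
        ((\<lambda>c'. solP G (kf c') (af c') (bf c') t) \<longlongrightarrow> solP G (kf c) (af c) (bf c) t) (at c within S)"
    if c: "c \<in> S" for c
  proof -
    define C where "C = \<bar>bf c\<bar> + ((\<bar>bf c\<bar> + \<bar>kf c * bf c - G (af c)\<bar>)/(1 + \<bar>kf c\<bar> + M)) * exp ((1 + \<bar>kf c\<bar> + M) * t)"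
    define g where "g = (\<lambda>c'. (\<bar>af c - af c'\<bar> + \<bar>bf c - bf c'\<bar> + \<bar>kf c - kf c'\<bar> * C * t) * exp (L * t))"
    have bd: "\<bar>solT G (kf c) (af c) (bf c) t - solT G (kf c') (af c') (bf c') t\<bar> +
        \<bar>solP G (kf c) (af c) (bf c) t - solP G (kf c') (af c') (bf c') t\<bar> \<le> g c'" if "c' \<in> S" for c'
      unfolding g_def C_def by (rule sol_dep[OF L(1)[OF that] L(2) t])
    have "(af \<longlongrightarrow> af c) (at c within S)" "(bf \<longlongrightarrow> bf c) (at c within S)" "(kf \<longlongrightarrow> kf c) (at c within S)"
      using ca cb ck c by (auto simp: continuous_on_def)
    then have "(g \<longlongrightarrow> (\<bar>af c - af c\<bar> + \<bar>bf c - bf c\<bar> + \<bar>kf c - kf c\<bar> * C * t) * exp (L * t)) (at c within S)"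
      unfolding g_def by (intro tendsto_intros)
    then have g0: "(g \<longlongrightarrow> 0) (at c within S)" by simp
    have ev: "\<forall>\<^sub>F c' in at c within S. c' \<in> S" by (auto simp: eventually_at_filter)
    have "((\<lambda>c'. solT G (kf c') (af c') (bf c') t - solT G (kf c) (af c) (bf c) t) \<longlongrightarrow> 0) (at c within S)"
    proof (rule Lim_null_comparison[OF _ g0])
      show "\<forall>\<^sub>F c' in at c within S. norm (solT G (kf c') (af c') (bf c') t - solT G (kf c) (af c) (bf c) t) \<le> g c'"
        using ev
      proof eventually_elim
        case (elim c')
        then show ?case using bd[OF elim] by (simp add: abs_minus_commute)
      qed
    qed
    moreover have "((\<lambda>c'. solP G (kf c') (af c') (bf c') t - solP G (kf c) (af c) (bf c) t) \<longlongrightarrow> 0) (at c within S)"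
    proof (rule Lim_null_comparison[OF _ g0])
      show "\<forall>\<^sub>F c' in at c within S. norm (solP G (kf c') (af c') (bf c') t - solP G (kf c) (af c) (bf c) t) \<le> g c'"
        using ev
      proof eventually_elim
        case (elim c')
        then show ?case using bd[OF elim] by (simp add: abs_minus_commute)
      qed
    qed
    ultimately show ?thesis by (auto dest: LIM_zero_cancel)
  qed
  then show ?thesis by (auto simp: continuous_on_def)
qed

end




lemma last_le:
  fixes f :: "real \<Rightarrow> real"
  assumes "continuous_on {a..b} f" "f a \<le> c" "a \<le> b"
  shows "\<exists>w\<in>{a..b}. f w \<le> c \<and> (\<forall>t\<in>{w<..b}. f t > c)"
proof -
  let ?S = "{x \<in> {a..b}. f x \<le> c}"
  have cl: "closed ?S"
    using continuous_on_closed_Collect_le[OF assms(1) continuous_on_const[of _ c]] by simp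
  have ne: "?S \<noteq> {}" using assms by auto
  have bd: "bdd_above ?S" by (rule bdd_aboveI[of _ b]) auto
  have w: "Sup ?S \<in> ?S" by (rule closed_contains_Sup[OF ne bd cl])
  have "f t > c" if "t \<in> {Sup ?S<..b}" for t
  proof (rule ccontr)
    assume "\<not> f t > c"
    then have "t \<in> ?S" using that w by auto
    then have "t \<le> Sup ?S" by (intro cSup_upper bd)
    then show False using that by auto
  qed
  then show ?thesis using w by blast
qed

lemma first_le:
  fixes f :: "real \<Rightarrow> real"
  assumes "continuous_on {a..b} f" "f b \<le> c" "a \<le> b"
  shows "\<exists>w\<in>{a..b}. f w \<le> c \<and> (\<forall>t\<in>{a..<w}. f t > c)"
proof -
  let ?S = "{x \<in> {a..b}. f x \<le> c}"
  have cl: "closed ?S"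
    using continuous_on_closed_Collect_le[OF assms(1) continuous_on_const[of _ c]] by simp
  have ne: "?S \<noteq> {}" using assms by auto
  have bd: "bdd_below ?S" by (rule bdd_belowI[of _ a]) auto
  have w: "Inf ?S \<in> ?S" by (rule closed_contains_Inf[OF ne bd cl])
  have "f t > c" if "t \<in> {a..<Inf ?S}" for t
  proof (rule ccontr)
    assume "\<not> f t > c"
    then have "t \<in> ?S" using that w by auto
    then have "Inf ?S \<le> t" by (intro cInf_lower bd)
    then show False using that by auto
  qed
  then show ?thesis using w by blast
qed

lemma at0_interior:
  fixes f :: "real \<Rightarrow> real"
  assumes "(f has_real_derivative D) (at x within {0..})" "0 < x"
  shows "(f has_real_derivative D) (at x)"
  using assms at_within_interior[of x "{0..}"] by simp

lemma exp_e1: fixes k t :: real shows "exp (k*t) * exp (-k*t) = 1"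
  by (metis exp_minus_inverse minus_mult_left)

lemma exp_e2: fixes k t s :: real shows "exp (k*t) * exp (-k * s) = exp (k*(t-s))"
  by (metis exp_add minus_mult_left right_diff_distrib diff_conv_add_uminus mult_minus_right)

definition invf :: "(real \<Rightarrow> real) \<Rightarrow> real \<Rightarrow> real" where
  "invf f y = (THE x. 0 \<le> x \<and> f x = y)"

locale traj =
  fixes th p :: "real \<Rightarrow> real" and k :: real and G :: "real \<Rightarrow> real"
  assumes dT: "\<And>x. 0 \<le> x \<Longrightarrow> (th has_real_derivative p x) (at x within {0..})"
    and dP: "\<And>x. 0 \<le> x \<Longrightarrow> (p has_real_derivative (k * p x - G (th x))) (at x within {0..})"
    and k0: "0 \<le> k" and Gnn: "\<And>x. 0 \<le> G x" and Gc: "continuous_on UNIV G"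
begin

lemma contT: "continuous_on {0..} th"
  unfolding continuous_on_eq_continuous_within
proof
  fix x :: real assume "x \<in> {0..}"
  then show "continuous (at x within {0..}) th" by (intro DERIV_continuous[OF dT]) simp
qed

lemma contP: "continuous_on {0..} p"
  unfolding continuous_on_eq_continuous_within
proof
  fix x :: real assume "x \<in> {0..}"
  then show "continuous (at x within {0..}) p" by (intro DERIV_continuous[OF dP]) simp
qed

lemma contT': "0 \<le> a \<Longrightarrow> continuous_on {a..b} th"
  by (rule continuous_on_subset[OF contT]) auto

lemma contP': "0 \<le> a \<Longrightarrow> continuous_on {a..b} p"
  by (rule continuous_on_subset[OF contP]) auto

lemma r_deriv:
  assumes t: "0 < t"
  shows "((\<lambda>t. exp (-k*t) * (p t - c0)) has_real_derivative exp (-k*t) * (k * c0 - G (th t))) (at t)"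
proof -
  have l: "((\<lambda>t. -k*t) has_real_derivative -k) (at t)"
    using DERIV_cmult[OF DERIV_ident, of "-k" t] by simp
  have e: "((\<lambda>t. exp (-k*t)) has_real_derivative exp (-k*t) * (-k)) (at t)"
    by (rule DERIV_fun_exp[OF l])
  have q: "((\<lambda>t. p t - c0) has_real_derivative (k * p t - G (th t)) - 0) (at t)"
    by (rule DERIV_diff[OF at0_interior[OF dP[of t]] DERIV_const]) (use t in auto)
  have "((\<lambda>t. exp (-k*t) * (p t - c0)) has_real_derivative
      exp (-k*t) * (-k) * (p t - c0) + ((k * p t - G (th t)) - 0) * exp (-k*t)) (at t)"
    by (rule DERIV_mult[OF e q])
  moreover have "exp (-k*t) * (-k) * (p t - c0) + ((k * p t - G (th t)) - 0) * exp (-k*t) = exp (-k*t) * (k * c0 - G (th t))"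
    by (simp add: algebra_simps)
  ultimately show ?thesis by simp
qed

lemma r_dec:
  assumes "0 \<le> x" "x \<le> y" "\<And>t. t \<in> {x..y} \<Longrightarrow> k * c0 \<le> G (th t)"
  shows "exp (-k*y) * (p y - c0) \<le> exp (-k*x) * (p x - c0)"
proof (rule DERIV_nonpos_imp_decreasing_open[OF assms(2)])
  fix t assume t: "x < t" "t < y"
  have "exp (-k*t) * (k * c0 - G (th t)) \<le> 0"
    using assms(3)[of t] t by (intro mult_nonneg_nonpos) auto
  then show "\<exists>d. ((\<lambda>t. exp (-k*t) * (p t - c0)) has_real_derivative d) (at t) \<and> d \<le> 0"
    using r_deriv[of t c0] t assms(1) by auto
next
  show "continuous_on {x..y} (\<lambda>t. exp (-k*t) * (p t - c0))"
    using contP'[OF assms(1)] by (intro continuous_intros)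
qed

lemma r_inc:
  assumes "0 \<le> x" "x \<le> y" "\<And>t. t \<in> {x..y} \<Longrightarrow> G (th t) \<le> k * c0"
  shows "exp (-k*x) * (p x - c0) \<le> exp (-k*y) * (p y - c0)"
proof (rule DERIV_nonneg_imp_increasing_open[OF assms(2)])
  fix t assume t: "x < t" "t < y"
  have "exp (-k*t) * (k * c0 - G (th t)) \<ge> 0"
    using assms(3)[of t] t by (intro mult_nonneg_nonneg) auto
  then show "\<exists>d. ((\<lambda>t. exp (-k*t) * (p t - c0)) has_real_derivative d) (at t) \<and> d \<ge> 0"
    using r_deriv[of t c0] t assms(1) by auto
next
  show "continuous_on {x..y} (\<lambda>t. exp (-k*t) * (p t - c0))"
    using contP'[OF assms(1)] by (intro continuous_intros)
qed

lemma q_dec: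
  assumes "0 \<le> x" "x \<le> y"
  shows "exp (-k*y) * p y \<le> exp (-k*x) * p x"
  using r_dec[OF assms, of 0] Gnn by simp

lemma th_lin:
  assumes "0 \<le> x" "x \<le> y" "\<And>t. t \<in> {x..y} \<Longrightarrow> c0 \<le> p t"
  shows "th x + c0 * (y - x) \<le> th y"
proof -
  have "(\<lambda>t. th t - c0 * t) x \<le> (\<lambda>t. th t - c0 * t) y"
  proof (rule DERIV_nonneg_imp_increasing_open[OF assms(2)])
    fix t assume t: "x < t" "t < y"
    have "((\<lambda>t. th t - c0 * t) has_real_derivative (p t - c0 * 1)) (at t)"
      using at0_interior[OF dT] t assms(1) by (auto intro!: derivative_eq_intros)
    then show "\<exists>d. ((\<lambda>t. th t - c0 * t) has_real_derivative d) (at t) \<and> d \<ge> 0"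
      using assms(3)[of t] t by auto
  next
    show "continuous_on {x..y} (\<lambda>t. th t - c0 * t)"
      using contT'[OF assms(1)] by (intro continuous_intros)
  qed
  then show ?thesis by (simp add: algebra_simps)
qed

lemma th_mono:
  assumes "0 \<le> x" "x \<le> y" "\<And>t. t \<in> {x..y} \<Longrightarrow> 0 \<le> p t"
  shows "th x \<le> th y"
  using th_lin[OF assms(1,2), of 0] assms(3) by simp

lemma th_anti:
  assumes "0 \<le> x" "x \<le> y" "\<And>t. t \<in> {x..y} \<Longrightarrow> p t \<le> 0"
  shows "th y \<le> th x"
proof (rule DERIV_nonpos_imp_decreasing_open[OF assms(2)])
  fix t assume t: "x < t" "t < y"
  have "(th has_real_derivative p t) (at t)" using at0_interior[OF dT[of t]] t assms(1) by auto
  then show "\<exists>d. (th has_real_derivative d) (at t) \<and> d \<le> 0"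
    using assms(3)[of t] t by auto
qed (rule contT'[OF assms(1)])

lemma th_strict_mono:
  assumes "0 \<le> x" "x < y" "\<And>t. t \<in> {x<..<y} \<Longrightarrow> 0 < p t"
  shows "th x < th y"
proof -
  have "\<exists>l z. x < z \<and> z < y \<and> (th has_real_derivative l) (at z) \<and> th y - th x = (y - x) * l"
  proof (rule MVT[OF assms(2) contT'[OF assms(1)]])
    fix z assume "x < z" "z < y"
    then show "th differentiable (at z)"
      using at0_interior[OF dT[of z]] assms(1) real_differentiable_def by force
  qed
  then obtain l z where lz: "x < z" "z < y" "(th has_real_derivative l) (at z)" "th y - th x = (y - x) * l" by blast
  have "(th has_real_derivative p z) (at z)" using at0_interior[OF dT[of z]] lz assms(1) by auto
  then have "l = p z" using lz(3) DERIV_unique by blast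
  then have z: "x < z" "z < y" "th y - th x = (y - x) * p z" using lz by auto
  moreover have "(y - x) * p z > 0" using assms(3)[of z] z assms(2) by (intro mult_pos_pos) auto
  ultimately show ?thesis by linarith
qed

lemma th_strict_anti:
  assumes "0 \<le> x" "x < y" "\<And>t. t \<in> {x<..<y} \<Longrightarrow> p t < 0"
  shows "th y < th x"
proof -
  have "\<exists>l z. x < z \<and> z < y \<and> (th has_real_derivative l) (at z) \<and> th y - th x = (y - x) * l"
  proof (rule MVT[OF assms(2) contT'[OF assms(1)]])
    fix z assume "x < z" "z < y"
    then show "th differentiable (at z)"
      using at0_interior[OF dT[of z]] assms(1) real_differentiable_def by force
  qed
  then obtain l z where lz: "x < z" "z < y" "(th has_real_derivative l) (at z)" "th y - th x = (y - x) * l" by blast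
  have "(th has_real_derivative p z) (at z)" using at0_interior[OF dT[of z]] lz assms(1) by auto
  then have "l = p z" using lz(3) DERIV_unique by blast
  then have z: "x < z" "z < y" "th y - th x = (y - x) * p z" using lz by auto
  moreover have "(y - x) * p z < 0" using assms(3)[of z] z assms(2) by (intro mult_pos_neg) auto
  ultimately show ?thesis by linarith
qed

lemma mvt_th:
  assumes "0 \<le> x" "x < y"
  shows "\<exists>z. x < z \<and> z < y \<and> th y - th x = (y - x) * p z"
proof -
  have "\<exists>l z. x < z \<and> z < y \<and> (th has_real_derivative l) (at z) \<and> th y - th x = (y - x) * l"
  proof (rule MVT[OF assms(2) contT'[OF assms(1)]])
    fix z assume "x < z" "z < y"
    then show "th differentiable (at z)"
      using at0_interior[OF dT[of z]] assms(1) real_differentiable_def by force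
  qed
  then obtain l z where lz: "x < z" "z < y" "(th has_real_derivative l) (at z)" "th y - th x = (y - x) * l" by blast
  have "(th has_real_derivative p z) (at z)" using at0_interior[OF dT[of z]] lz assms(1) by auto
  then have "l = p z" using lz(3) DERIV_unique by blast
  then show ?thesis using lz by auto
qed

lemma exp_scale:
  assumes "exp (-k*t) * u \<le> exp (-k * s) * v"
  shows "u \<le> exp (k*(t-s)) * v"
proof -
  have "exp (k*t) * (exp (-k*t) * u) \<le> exp (k*t) * (exp (-k * s) * v)"
    by (rule mult_left_mono[OF assms]) simp
  moreover have "exp (k*t) * (exp (-k*t) * u) = u"
    by (simp only: mult.assoc[symmetric] exp_e1 mult_1)
  moreover have "exp (k*t) * (exp (-k * s) * v) = exp (k*(t-s)) * v"
    by (simp only: mult.assoc[symmetric] exp_e2)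
  ultimately show ?thesis by linarith
qed

lemma exp_scale':
  assumes "exp (-k * s) * v \<le> exp (-k*t) * u"
  shows "exp (k*(t-s)) * v \<le> u"
proof -
  have "exp (k*t) * (exp (-k * s) * v) \<le> exp (k*t) * (exp (-k*t) * u)"
    by (rule mult_left_mono[OF assms]) simp
  moreover have "exp (k*t) * (exp (-k*t) * u) = u"
    by (simp only: mult.assoc[symmetric] exp_e1 mult_1)
  moreover have "exp (k*t) * (exp (-k * s) * v) = exp (k*(t-s)) * v"
    by (simp only: mult.assoc[symmetric] exp_e2)
  ultimately show ?thesis by linarith
qed

lemma Un_inv:
  assumes "0 \<le> x" "p x < 0" "x \<le> t"
  shows "p t < 0 \<and> th t \<le> th x"
proof -
  have pt: "p s < 0" if "x \<le> s" for s
  proof -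
    have "exp (-k* s) * p s \<le> exp (-k*x) * p x" by (rule q_dec) (use assms that in auto)
    also have "\<dots> < 0" using assms(2) by (simp add: mult_pos_neg)
    finally show ?thesis by (simp add: mult_less_0_iff)
  qed
  have "th t \<le> th x" by (rule th_anti) (use assms pt in \<open>auto intro: less_imp_le\<close>)
  then show ?thesis using pt[OF assms(3)] by auto
qed

context
  assumes G1: "\<And>x. 1 \<le> x \<Longrightarrow> G x = 0"
begin

lemma Ov_pos:
  assumes th0: "th 0 \<le> 1" and y: "0 \<le> y" "th y > 1"
  shows "p y > 0"
proof -
  obtain w where w: "w \<in> {0..y}" "th w \<le> 1" "\<And>t. t \<in> {w<..y} \<Longrightarrow> th t > 1"
    using last_le[OF contT'[of 0 y] th0 y(1)] by auto
  have wy: "w < y" using w y by (cases "w = y") auto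
  obtain z where z: "w < z" "z < y" "th y - th w = (y - w) * p z"
    using mvt_th[of w y] w wy by auto
  have pz: "p z > 0"
  proof (rule ccontr)
    assume "\<not> p z > 0"
    then have "(y - w) * p z \<le> 0" using wy by (intro mult_nonneg_nonpos) auto
    then show False using z(3) w(2) y(2) by linarith
  qed
  have Gz: "G (th t) = 0" if "t \<in> {z..y}" for t using G1 w(3)[of t] that z by auto
  have "exp (-k*y) * (p y - 0) \<ge> exp (-k*z) * (p z - 0)"
    by (rule r_inc) (use z w Gz in auto)
  moreover have "exp (-k*z) * p z > 0" using pz by simp
  ultimately have "exp (-k*y) * p y > 0" by simp
  then show ?thesis by (simp add: zero_less_mult_iff)
qed

lemma Ov_inv:
  assumes th0: "th 0 \<le> 1" and y: "0 \<le> y" "th y > 1" and t: "y \<le> t"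
  shows "th t > 1"
proof (rule ccontr)
  assume "\<not> th t > 1"
  then have "th t \<le> 1" by simp
  then obtain w where w: "w \<in> {y..t}" "th w \<le> 1" "\<And>s. s \<in> {y..<w} \<Longrightarrow> th s > 1"
    using first_le[OF contT'[OF y(1), of t] \<open>th t \<le> 1\<close> t] by blast
  have wy: "y < w" using w y by (cases "w = y") auto
  have "th y < th w"
  proof (rule th_strict_mono)
    fix s assume "s \<in> {y<..<w}"
    then show "0 < p s" using Ov_pos[OF th0, of s] w(3)[of s] y by auto
  qed (use y wy in auto)
  then show False using w(2) y(2) by linarith
qed

lemma not_both:
  assumes th0: "th 0 \<le> 1" and y: "0 \<le> y" "th y > 1" and x: "0 \<le> x" "p x < 0" "th x < 1"
  shows False
proof -
  have "th (max x y) > 1" by (rule Ov_inv[OF th0 y]) auto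
  moreover have "th (max x y) \<le> th x" using Un_inv[OF x(1,2), of "max x y"] by auto
  ultimately show False using x(3) by linarith
qed

end

lemma U_start:
  assumes "th 0 < 1" "p 0 = 0" "G (th 0) > 0"
  shows "\<exists>x\<ge>0. p x < 0 \<and> th x < 1"
proof -
  have "(p has_real_derivative (k * p 0 - G (th 0))) (at 0 within {0..})" by (rule dP) simp
  moreover have "k * p 0 - G (th 0) < 0" using assms by simp
  ultimately obtain d where d: "d > 0" "\<And>h. h > 0 \<Longrightarrow> 0 + h \<in> {0..} \<Longrightarrow> h < d \<Longrightarrow> p 0 > p (0 + h)"
    using has_real_derivative_neg_dec_right by blast
  have "continuous (at 0 within {0..}) th" using contT continuous_on_eq_continuous_within by auto
  moreover have e: "1 - th 0 > 0" using assms by simp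
  ultimately obtain d' where d': "d' > 0" "\<And>x. x \<in> {0..} \<Longrightarrow> dist x 0 < d' \<Longrightarrow> dist (th x) (th 0) < 1 - th 0"
    unfolding continuous_within_eps_delta by blast
  define h where "h = min d d' / 2"
  have h: "h > 0" "h < d" "h < d'" using d d' unfolding h_def by auto
  have "p h < 0" using d(2)[of h] h assms(2) by auto
  moreover have "th h < 1" using d'(2)[of h] h by (auto simp: dist_real_def)
  ultimately show ?thesis using h by (intro exI[of _ h]) auto
qed

lemma O_start:
  assumes "th 0 = 1" "p 0 > 0"
  shows "\<exists>x\<ge>0. th x > 1"
proof -
  have "(th has_real_derivative p 0) (at 0 within {0..})" by (rule dT) simp
  then obtain d where d: "d > 0" "\<And>h. h > 0 \<Longrightarrow> 0 + h \<in> {0..} \<Longrightarrow> h < d \<Longrightarrow> th 0 < th (0 + h)"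
    using has_real_derivative_pos_inc_right assms(2) by blast
  show ?thesis using d(2)[of "d/2"] d(1) assms(1) by (intro exI[of _ "d/2"]) auto
qed

context
  assumes G1: "\<And>x. 1 \<le> x \<Longrightarrow> G x = 0" and Gpos: "\<And>x. x < 1 \<Longrightarrow> 0 < G x" and kpos: "0 < k"
begin

lemma good:
  assumes th0: "0 \<le> th 0" "th 0 < 1"
    and noO: "\<not> (\<exists>y\<ge>0. th y > 1)" and noU: "\<not> (\<exists>x\<ge>0. p x < 0 \<and> th x < 1)"
  shows "(\<forall>x\<ge>0. th x \<in> {0..1}) \<and> (th \<longlongrightarrow> 1) at_top \<and> (p \<longlongrightarrow> 0) at_top"
proof -
  have g1: "th x \<le> 1" if "0 \<le> x" for x using noO that by auto
  have g2: "0 \<le> p x" if x: "0 \<le> x" for x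
  proof (rule ccontr)
    assume "\<not> 0 \<le> p x"
    then have px: "p x < 0" by simp
    then have thx: "th x = 1" using noU g1[OF x] x by force
    have "th (x+1) < th x"
      by (rule th_strict_anti) (use x Un_inv[OF x px] in auto)
    moreover have "p (x+1) < 0" using Un_inv[OF x px, of "x+1"] by auto
    ultimately show False using noU x thx by force
  qed
  have g3: "th x \<le> th y" if "0 \<le> x" "x \<le> y" for x y
    by (rule th_mono) (use that g2 in auto)
  have rng: "\<forall>x\<ge>0. th x \<in> {0..1}" using g1 g3[of 0] th0 by fastforce
  have near: "\<exists>N\<ge>0. th N > 1 - e" if e: "e > 0" for e
  proof (rule ccontr)
    assume "\<not> (\<exists>N\<ge>0. th N > 1 - e)"
    then have le: "th t \<le> 1 - e" if "0 \<le> t" for t using that by force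
    have ne: "{th 0..1 - e} \<noteq> {}" using le[of 0] by auto
    obtain xm where xm: "xm \<in> {th 0..1 - e}" "\<And>y. y \<in> {th 0..1 - e} \<Longrightarrow> G xm \<le> G y"
      using continuous_attains_inf[OF compact_Icc ne continuous_on_subset[OF Gc]] by blast
    define m where "m = G xm"
    have m0: "m > 0" unfolding m_def using xm(1) e by (intro Gpos) auto
    have Gm: "m \<le> G (th t)" if "0 \<le> t" for t
      unfolding m_def using xm(2)[of "th t"] le[OF that] g3[OF _ that] by auto
    show False
    proof (cases "\<exists>t0\<ge>0. p t0 < m / k")
      case True
      then obtain t0 where t0: "0 \<le> t0" "p t0 < m / k" by blast
      define d where "d = p t0 - m / k"
      have d0: "d < 0" using t0 unfolding d_def by simp
      define T where "T = t0 + (m / k) / (k * (- d))"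
      have "0 \<le> (m / k) / (k * (- d))" using d0 m0 kpos by (intro divide_nonneg_pos) (auto simp: mult_pos_neg)
      then have TT: "t0 \<le> T" unfolding T_def by linarith
      have "exp (-k*T) * (p T - m / k) \<le> exp (-k*t0) * (p t0 - m / k)"
        by (rule r_dec) (use t0 TT Gm kpos in auto)
      then have "p T - m / k \<le> exp (k*(T - t0)) * d" unfolding d_def by (rule exp_scale)
      also have "\<dots> \<le> (1 + k*(T - t0)) * d"
        using d0 exp_ge_add_one_self[of "k*(T-t0)"] by (intro mult_right_mono_neg) auto
      also have "(1 + k*(T - t0)) * d = d - m / k"
        unfolding T_def using d0 kpos by (simp add: field_simps)
      finally have "p T < 0" using d0 by linarith
      then show False using g2[of T] t0 TT by auto
    next
      case False
      then have pb: "m / k \<le> p t" if "0 \<le> t" for t using that by force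
      have "th 0 + m / k * (2 * k / m - 0) \<le> th (2 * k / m)"
        by (rule th_lin) (use pb m0 kpos in auto)
      moreover have "m / k * (2 * k / m - 0) = 2" using m0 kpos by simp
      ultimately show False using g1[of "2 * k / m"] th0 m0 kpos by auto
    qed
  qed
  have lim1: "(th \<longlongrightarrow> 1) at_top"
  proof (rule tendstoI)
    fix e :: real assume e: "e > 0"
    obtain N where N: "N \<ge> 0" "th N > 1 - e" using near[OF e] by blast
    show "\<forall>\<^sub>F x in at_top. dist (th x) 1 < e"
      unfolding eventually_at_top_linorder
    proof (intro exI allI impI)
      fix x assume "N \<le> x"
      then have "th N \<le> th x" "th x \<le> 1" using g3 g1 N by auto
      then show "dist (th x) 1 < e" using N by (simp add: dist_real_def)
    qed
  qed
  have lim2: "(p \<longlongrightarrow> 0) at_top"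
  proof (rule tendstoI)
    fix e :: real assume e: "e > 0"
    have "isCont G 1" using Gc by (simp add: continuous_on_eq_continuous_at)
    then have "((\<lambda>t. G (th t)) \<longlongrightarrow> G 1) at_top" by (rule isCont_tendsto_compose[OF _ lim1])
    then have "((\<lambda>t. G (th t)) \<longlongrightarrow> 0) at_top" using G1[of 1] by simp
    moreover have "k * (e / 2) > 0" using kpos e by simp
    ultimately have "\<forall>\<^sub>F t in at_top. G (th t) < k * (e / 2)" by (rule order_tendstoD(2))
    then obtain N1 where N1: "\<And>t. t \<ge> N1 \<Longrightarrow> G (th t) < k * (e / 2)"
      unfolding eventually_at_top_linorder by blast
    show "\<forall>\<^sub>F x in at_top. dist (p x) 0 < e"
    proof (rule ccontr)
      assume "\<not> (\<forall>\<^sub>F x in at_top. dist (p x) 0 < e)"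
      then have "\<forall>N. \<exists>t\<ge>N. \<not> dist (p t) 0 < e"
        unfolding eventually_at_top_linorder by blast
      then obtain t0 where t0: "t0 \<ge> max N1 0" "\<not> dist (p t0) 0 < e" by blast
      have pt0: "p t0 \<ge> e" using t0 g2[of t0] by (auto simp: dist_real_def)
      have pt: "p t \<ge> e" if t: "t0 \<le> t" for t
      proof -
        have "exp (-k*t0) * (p t0 - e / 2) \<le> exp (-k*t) * (p t - e / 2)"
          by (rule r_inc) (use t0 t N1 in \<open>auto intro: less_imp_le\<close>)
        then have "exp (k*(t - t0)) * (p t0 - e / 2) \<le> p t - e / 2" by (rule exp_scale')
        moreover have ex1: "1 \<le> exp (k*(t - t0))" using t kpos by simp
        moreover have "(p t0 - e / 2) \<le> exp (k*(t - t0)) * (p t0 - e / 2)"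
          using mult_right_mono[OF ex1, of "p t0 - e / 2"] pt0 e by simp
        ultimately show ?thesis using pt0 by linarith
      qed
      have "th t0 + e * (t0 + 2 / e - t0) \<le> th (t0 + 2 / e)"
        by (rule th_lin) (use t0 pt e in auto)
      moreover have "e * (t0 + 2 / e - t0) = 2" using e by simp
      moreover have "th t0 \<ge> 0" using rng t0 by auto
      ultimately show False using g1[of "t0 + 2 / e"] t0 e by auto
    qed
  qed
  show ?thesis using rng lim1 lim2 by blast
qed

end

lemma V_deriv:
  fixes C :: real
  assumes t: "0 < t"
  shows "((\<lambda>t. exp (C*t) * ((1 - th t)^2 + (p t)^2)) has_real_derivative
     exp (C*t) * (C * ((1 - th t)^2 + (p t)^2) + (2 * (1 - th t) * (- p t) + 2 * p t * (k * p t - G (th t))))) (at t)"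
proof -
  have l: "((\<lambda>t. C*t) has_real_derivative C) (at t)"
    using DERIV_cmult[OF DERIV_ident, of C t] by simp
  have e: "((\<lambda>t. exp (C*t)) has_real_derivative exp (C*t) * C) (at t)"
    by (rule DERIV_fun_exp[OF l])
  have dT': "(th has_real_derivative p t) (at t)" using at0_interior[OF dT[of t]] t by auto
  have dP': "(p has_real_derivative (k * p t - G (th t))) (at t)" using at0_interior[OF dP[of t]] t by auto
  have u: "((\<lambda>t. 1 - th t) has_real_derivative 0 - p t) (at t)"
    by (rule DERIV_diff[OF DERIV_const dT'])
  have u2: "((\<lambda>t. (1 - th t)^2) has_real_derivative real 2 * ((0 - p t) * (1 - th t) ^ (2 - Suc 0))) (at t)"
    by (rule DERIV_power[OF u])
  have p2: "((\<lambda>t. (p t)^2) has_real_derivative real 2 * ((k * p t - G (th t)) * (p t) ^ (2 - Suc 0))) (at t)"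
    by (rule DERIV_power[OF dP'])
  have s: "((\<lambda>t. (1 - th t)^2 + (p t)^2) has_real_derivative
      real 2 * ((0 - p t) * (1 - th t) ^ (2 - Suc 0)) + real 2 * ((k * p t - G (th t)) * (p t) ^ (2 - Suc 0))) (at t)"
    by (rule DERIV_add[OF u2 p2])
  have "((\<lambda>t. exp (C*t) * ((1 - th t)^2 + (p t)^2)) has_real_derivative
      exp (C*t) * C * ((1 - th t)^2 + (p t)^2) + (real 2 * ((0 - p t) * (1 - th t) ^ (2 - Suc 0)) + real 2 * ((k * p t - G (th t)) * (p t) ^ (2 - Suc 0))) * exp (C*t)) (at t)"
    by (rule DERIV_mult[OF e s])
  moreover have "exp (C*t) * C * ((1 - th t)^2 + (p t)^2) + (real 2 * ((0 - p t) * (1 - th t) ^ (2 - Suc 0)) + real 2 * ((k * p t - G (th t)) * (p t) ^ (2 - Suc 0))) * exp (C*t)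
     = exp (C*t) * (C * ((1 - th t)^2 + (p t)^2) + (2 * (1 - th t) * (- p t) + 2 * p t * (k * p t - G (th t))))"
    by (simp add: algebra_simps)
  ultimately show ?thesis by simp
qed

lemma V_ineq:
  fixes u q g M kk :: real
  assumes "0 \<le> u" "0 \<le> q" "0 \<le> g" "g \<le> M * u" "0 \<le> M" "0 \<le> kk"
  shows "0 \<le> (1 + M) * (u^2 + q^2) + (2 * u * (- q) + 2 * q * (kk * q - g))"
proof -
  have "2 * q * g \<le> 2 * q * (M * u)" using assms by (intro mult_left_mono) auto
  moreover have "0 \<le> (u - q)^2 + M * (u - q)^2 + 2 * kk * q^2" using assms by auto
  ultimately show ?thesis by (simp add: power2_eq_square algebra_simps)
qed

lemma sol_props:
  assumes rng: "\<And>x. 0 \<le> x \<Longrightarrow> th x \<in> {0..1}" and limp: "(p \<longlongrightarrow> 0) at_top"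
    and Gpos: "\<And>x. x < 1 \<Longrightarrow> 0 < G x" and GM: "\<And>x. x \<in> {0..1} \<Longrightarrow> G x \<le> M * (1 - x)" and M0: "0 \<le> M"
    and init: "\<not> (th 0 = 1 \<and> p 0 = 0)"
  shows "\<forall>x\<ge>0. 0 < p x \<and> th x < 1"
proof -
  have pnn: "0 \<le> p x" if x: "0 \<le> x" for x
  proof (rule ccontr)
    assume "\<not> 0 \<le> p x"
    then have px: "p x < 0" by simp
    have pt: "p t \<le> p x" if "x \<le> t" for t
    proof -
      have "exp (-k*t) * p t \<le> exp (-k*x) * p x" by (rule q_dec) (use x that in auto)
      then have "p t \<le> exp (k*(t - x)) * p x" using exp_scale[of t "p t" x "p x"] by simp
      also have "\<dots> \<le> 1 * p x" using px that k0 by (intro mult_right_mono_neg) auto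
      finally show ?thesis by simp
    qed
    have "- p x / 2 > 0" using px by simp
    then have "\<forall>\<^sub>F t in at_top. dist (p t) 0 < - p x / 2" using limp tendstoD by blast
    then obtain N where "\<And>t. t \<ge> N \<Longrightarrow> dist (p t) 0 < - p x / 2" unfolding eventually_at_top_linorder by blast
    then have "dist (p (max N x)) 0 < - p x / 2" by simp
    moreover have "p (max N x) \<le> p x" by (rule pt) simp
    ultimately show False using px by (simp add: dist_real_def)
  qed
  have thl: "th x < 1" if x: "0 \<le> x" for x
  proof (rule ccontr)
    assume "\<not> th x < 1"
    then have thx: "th x = 1" using rng[OF x] by auto
    have px: "p x = 0"
    proof (cases "x = 0")
      case True
      show ?thesis
      proof (rule ccontr)
        assume "p x \<noteq> 0"
        then have "p 0 > 0" using pnn[of 0] True by auto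
        then obtain d where d: "d > 0" "\<And>h. h > 0 \<Longrightarrow> 0 + h \<in> {0..} \<Longrightarrow> h < d \<Longrightarrow> th 0 < th (0 + h)"
          using has_real_derivative_pos_inc_right[OF dT[of 0]] by auto
        then have "th 0 < th (d/2)" by auto
        then show False using rng[of "d/2"] d(1) thx True by auto
      qed
    next
      case False
      then have x0: "0 < x" using x by simp
      show ?thesis
      proof (rule DERIV_local_max[OF at0_interior[OF dT[OF x] x0] x0])
        show "\<forall>y. \<bar>x - y\<bar> < x \<longrightarrow> th y \<le> th x"
          using rng thx by (auto simp: abs_less_iff)
      qed
    qed
    define W where "W = (\<lambda>t. exp ((1 + M)*t) * ((1 - th t)^2 + (p t)^2))"
    have "W 0 \<le> W x"
    proof (rule DERIV_nonneg_imp_increasing_open[OF x])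
      fix t assume t: "0 < t" "t < x"
      have "0 \<le> (1 + M) * ((1 - th t)^2 + (p t)^2) + (2 * (1 - th t) * (- p t) + 2 * p t * (k * p t - G (th t)))"
        by (rule V_ineq) (use rng[of t] t pnn[of t] Gpos GM[of "th t"] M0 k0 Gnn in auto)
      then have "0 \<le> exp ((1 + M)*t) * ((1 + M) * ((1 - th t)^2 + (p t)^2) + (2 * (1 - th t) * (- p t) + 2 * p t * (k * p t - G (th t))))"
        by simp
      moreover have "(W has_real_derivative exp ((1 + M)*t) * ((1 + M) * ((1 - th t)^2 + (p t)^2) + (2 * (1 - th t) * (- p t) + 2 * p t * (k * p t - G (th t))))) (at t)"
        unfolding W_def by (rule V_deriv[OF t(1)])
      ultimately show "\<exists>y. (W has_real_derivative y) (at t) \<and> 0 \<le> y" by blast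
    next
      show "continuous_on {0..x} W" unfolding W_def
        using contT'[of 0 x] contP'[of 0 x] by (intro continuous_intros) auto
    qed
    then have "(1 - th 0)^2 + (p 0)^2 \<le> 0" unfolding W_def using thx px by simp
    then have "1 - th 0 = 0 \<and> p 0 = 0" by (simp only: sum_power2_le_zero_iff)
    then have "th 0 = 1" "p 0 = 0" by auto
    then show False using init by auto
  qed
  have "0 < p x" if x: "0 \<le> x" for x
  proof (rule ccontr)
    assume "\<not> 0 < p x"
    then have px: "p x = 0" using pnn[OF x] by auto
    have "k * p x - G (th x) < 0" using px Gpos[OF thl[OF x]] by simp
    then obtain d where d: "d > 0" "\<And>h. h > 0 \<Longrightarrow> x + h \<in> {0..} \<Longrightarrow> h < d \<Longrightarrow> p x > p (x + h)"
      using has_real_derivative_neg_dec_right[OF dP[OF x]] by blast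
    then have "p (x + d/2) < 0" using px x by auto
    then show False using pnn[of "x + d/2"] x d(1) by auto
  qed
  then show ?thesis using thl by auto
qed

context
  assumes pos: "\<And>x. 0 \<le> x \<Longrightarrow> 0 < p x \<and> th x < 1" and limT: "(th \<longlongrightarrow> 1) at_top"
begin

lemma smono: "0 \<le> x \<Longrightarrow> x < y \<Longrightarrow> th x < th y"
  by (rule th_strict_mono) (use pos in auto)

lemma smono_le: "0 \<le> x \<Longrightarrow> 0 \<le> y \<Longrightarrow> th x \<le> th y \<longleftrightarrow> x \<le> y"
  using smono[of x y] smono[of y x] by (cases x y rule: linorder_cases) auto

lemma inv_ex:
  assumes "th 0 \<le> y" "y < 1"
  shows "\<exists>x\<ge>0. th x = y"
proof -
  have "1 - y > 0" using assms by simp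
  then have "\<forall>\<^sub>F x in at_top. th x > y" using limT order_tendstoD(1) assms(2) by blast
  then obtain X where X: "\<And>x. x \<ge> X \<Longrightarrow> th x > y" unfolding eventually_at_top_linorder by blast
  have "th (max X 0) > y" using X by simp
  have "\<exists>x. 0 \<le> x \<and> x \<le> max X 0 \<and> th x = y"
    by (rule IVT') (use assms(1) \<open>th (max X 0) > y\<close> contT'[of 0 "max X 0"] in auto)
  then show ?thesis by blast
qed

lemma inv_eq:
  assumes "th 0 \<le> y" "y < 1"
  shows "0 \<le> invf th y \<and> th (invf th y) = y"
proof -
  obtain x where x: "0 \<le> x" "th x = y" using inv_ex[OF assms] by blast
  have "invf th y = x" unfolding invf_def
  proof (rule the_equality)
    show "0 \<le> x \<and> th x = y" using x by simp
    fix x' assume "0 \<le> x' \<and> th x' = y"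
    then show "x' = x" using x smono_le by (metis order_antisym order_refl)
  qed
  then show ?thesis using x by simp
qed

lemma inv_th:
  assumes x: "0 \<le> x" shows "invf th (th x) = x"
  unfolding invf_def
proof (rule the_equality)
  show "0 \<le> x \<and> th x = th x" using x by simp
  fix x' assume x': "0 \<le> x' \<and> th x' = th x"
  then have "x' \<le> x" "x \<le> x'" using smono_le[of x' x] smono_le[of x x'] x by auto
  then show "x' = x" by simp
qed

lemma inv_pos:
  assumes "th 0 < y" "y < 1"
  shows "0 < invf th y"
proof -
  have "0 \<le> invf th y" "th (invf th y) = y" using inv_eq assms by auto
  then show ?thesis using assms(1) by (cases "invf th y = 0") auto
qed

lemma inv_cont:
  assumes "th 0 < y" "y < 1"
  shows "isCont (invf th) y"
proof -
  define x where "x = invf th y"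
  have x: "0 < x" "th x = y" unfolding x_def using inv_pos inv_eq assms by auto
  have "isCont (invf th) (th x)"
  proof (rule isCont_inverse_function2[of "x/2" x "x+1"])
    fix z assume z: "x/2 \<le> z" "z \<le> x + 1"
    then show "invf th (th z) = z" using x inv_th by auto
    show "isCont th z" using DERIV_isCont[OF at0_interior[OF dT[of z]]] z x by auto
  qed (use x in auto)
  then show ?thesis using x by simp
qed

lemma inv_deriv:
  assumes "th 0 < y" "y < 1"
  shows "(invf th has_real_derivative inverse (p (invf th y))) (at y)"
proof (rule DERIV_inverse_function[where a="th 0" and b=1])
  show "(th has_real_derivative p (invf th y)) (at (invf th y))"
    using at0_interior[OF dT[of "invf th y"]] inv_pos[OF assms] by auto
  show "p (invf th y) \<noteq> 0" using pos[of "invf th y"] inv_pos[OF assms] by auto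
  show "\<And>z. th 0 < z \<Longrightarrow> z < 1 \<Longrightarrow> th (invf th z) = z" using inv_eq by auto
  show "isCont (invf th) y" by (rule inv_cont[OF assms])
qed (use assms in auto)

end

end

lemma compare:
  assumes T1: "traj th1 p1 k1 G" and T2: "traj th2 p2 k2 G"
    and pos1: "\<And>x. 0 \<le> x \<Longrightarrow> 0 < p1 x \<and> th1 x < 1" and pos2: "\<And>x. 0 \<le> x \<Longrightarrow> 0 < p2 x \<and> th2 x < 1"
    and lT1: "(th1 \<longlongrightarrow> 1) at_top" and lP1: "(p1 \<longlongrightarrow> 0) at_top"
    and lT2: "(th2 \<longlongrightarrow> 1) at_top" and lP2: "(p2 \<longlongrightarrow> 0) at_top"
    and i1: "p1 0 = k1 * (th1 0 - r)" and i2: "p2 0 = k2 * (th2 0 - r)"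
    and ord: "k1 < k2" "th1 0 < th2 0" "r < th2 0"
  shows False
proof -
  interpret A: traj th1 p1 k1 G by (rule T1)
  interpret B: traj th2 p2 k2 G by (rule T2)
  have gle: "p1 x \<le> k1 * (th1 x - r)" if x: "0 \<le> x" for x
  proof -
    have "(\<lambda>x. p1 x - k1 * (th1 x - r)) x \<le> (\<lambda>x. p1 x - k1 * (th1 x - r)) 0"
    proof (rule DERIV_nonpos_imp_decreasing_open[OF x])
      fix t assume t: "0 < t" "t < x"
      have "((\<lambda>x. p1 x - k1 * (th1 x - r)) has_real_derivative (k1 * p1 t - G (th1 t)) - k1 * (p1 t - 0)) (at t)"
        by (intro DERIV_diff DERIV_cmult DERIV_const at0_interior[OF A.dP] at0_interior[OF A.dT]) (use t in auto)
      moreover have "(k1 * p1 t - G (th1 t)) - k1 * (p1 t - 0) \<le> 0" using A.Gnn[of "th1 t"] by simp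
      ultimately show "\<exists>y. ((\<lambda>x. p1 x - k1 * (th1 x - r)) has_real_derivative y) (at t) \<and> y \<le> 0" by blast
    next
      show "continuous_on {0..x} (\<lambda>x. p1 x - k1 * (th1 x - r))"
        using A.contP'[of 0 x] A.contT'[of 0 x] by (intro continuous_intros) auto
    qed
    then show ?thesis using i1 by simp
  qed
  have rng: "th1 0 < th2 s \<and> th2 s < 1" if "0 \<le> s" for s
    using B.smono_le[OF pos2 lT2, of 0 s] pos2[OF that] ord that by auto
  define \<phi> where "\<phi> s = invf th1 (th2 s)" for s
  have phi: "0 < \<phi> s \<and> th1 (\<phi> s) = th2 s" if "0 \<le> s" for s
    unfolding \<phi>_def using A.inv_pos[OF pos1 lT1] A.inv_eq[OF pos1 lT1] rng[OF that] by auto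
  have dphi: "(\<phi> has_real_derivative inverse (p1 (\<phi> s)) * p2 s) (at s)" if s: "0 < s" for s
    unfolding \<phi>_def
    by (rule DERIV_chain2[OF A.inv_deriv[OF pos1 lT1] at0_interior[OF B.dT]]) (use rng s in auto)
  define h where "h s = p2 s - p1 (\<phi> s)" for s
  have dh: "(h has_real_derivative (k2 * p2 s - G (th2 s)) - (k1 * p1 (\<phi> s) - G (th1 (\<phi> s))) * (inverse (p1 (\<phi> s)) * p2 s)) (at s)"
    if s: "0 < s" for s
  proof -
    have "((\<lambda>s. p1 (\<phi> s)) has_real_derivative (k1 * p1 (\<phi> s) - G (th1 (\<phi> s))) * (inverse (p1 (\<phi> s)) * p2 s)) (at s)"
      by (rule DERIV_chain2[OF at0_interior[OF A.dP] dphi[OF s]]) (use phi[of s] s in auto)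
    then show ?thesis unfolding h_def
      by (intro DERIV_diff at0_interior[OF B.dP]) (use s in auto)
  qed
  have dhpos: "0 < (k2 * p2 s - G (th2 s)) - (k1 * p1 (\<phi> s) - G (th1 (\<phi> s))) * (inverse (p1 (\<phi> s)) * p2 s)"
    if s: "0 < s" and hs: "0 < h s" for s
  proof -
    define P where "P = p1 (\<phi> s)"
    define q where "q = p2 s"
    define g where "g = G (th2 s)"
    have P0: "0 < P" unfolding P_def using pos1[of "\<phi> s"] phi[of s] s by auto
    have q0: "0 < q" unfolding q_def using pos2 s by auto
    have g0: "0 \<le> g" unfolding g_def by (rule B.Gnn)
    have qP: "P < q" using hs unfolding h_def P_def q_def by simp
    have e: "(k2 * q - g) - (k1 * P - g) * (inverse P * q) = (k2 - k1) * q + g * (q - P) / P"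
      using P0 by (simp add: field_simps)
    have "0 < (k2 - k1) * q" using ord q0 by simp
    moreover have "0 \<le> g * (q - P) / P" using g0 qP P0 by simp
    ultimately have "0 < (k2 * q - g) - (k1 * P - g) * (inverse P * q)" unfolding e by linarith
    then show ?thesis unfolding P_def q_def g_def using phi s by simp
  qed
  have cphi: "continuous_on {0..S} \<phi>" for S
  proof -
    have c1: "continuous_on {th1 0<..<1} (invf th1)"
      by (intro continuous_at_imp_continuous_on ballI A.inv_cont[OF pos1 lT1]) auto
    show ?thesis unfolding \<phi>_def
      by (rule continuous_on_compose2[OF c1 B.contT'[of 0 S]]) (use rng in auto)
  qed
  have ch: "continuous_on {0..S} h" for S
  proof -
    have "continuous_on {0..S} (\<lambda>s. p1 (\<phi> s))"
      by (rule continuous_on_compose2[OF A.contP cphi]) (use phi in \<open>auto intro: less_imp_le\<close>)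
    then show ?thesis unfolding h_def using B.contP'[of 0 S] by (intro continuous_intros) auto
  qed
  have h0: "0 < h 0"
  proof -
    have "p1 (\<phi> 0) \<le> k1 * (th1 (\<phi> 0) - r)" using gle[of "\<phi> 0"] phi[of 0] by auto
    also have "\<dots> = k1 * (th2 0 - r)" using phi[of 0] by simp
    also have "\<dots> < k2 * (th2 0 - r)" using ord by (intro mult_strict_right_mono) auto
    finally show ?thesis unfolding h_def using i2 by simp
  qed
  have hpos: "0 < h s" if s: "0 \<le> s" for s
  proof (rule ccontr)
    assume "\<not> 0 < h s"
    then have "h s \<le> 0" by simp
    then obtain w where w: "w \<in> {0..s}" "h w \<le> 0" "\<And>t. t \<in> {0..<w} \<Longrightarrow> h t > 0"
      using first_le[OF ch[of s] _ s] by blast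
    have w0: "0 \<le> w" using w(1) by simp
    have "h 0 \<le> h w"
    proof (rule DERIV_nonneg_imp_increasing_open[OF w0])
      fix t assume t: "0 < t" "t < w"
      then show "\<exists>y. (h has_real_derivative y) (at t) \<and> 0 \<le> y"
        using dh[of t] dhpos[of t] w(3)[of t] by (intro exI[of _ "(k2 * p2 t - G (th2 t)) - (k1 * p1 (\<phi> t) - G (th1 (\<phi> t))) * (inverse (p1 (\<phi> t)) * p2 t)"]) auto
    qed (use w ch in auto)
    then show False using h0 w(2) by linarith
  qed
  have hmono: "h 0 \<le> h s" if s: "0 \<le> s" for s
  proof (rule DERIV_nonneg_imp_increasing_open[OF s])
    fix t assume t: "0 < t" "t < s"
    then show "\<exists>y. (h has_real_derivative y) (at t) \<and> 0 \<le> y"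
      using dh[of t] dhpos[of t] hpos[of t] by (intro exI[of _ "(k2 * p2 t - G (th2 t)) - (k1 * p1 (\<phi> t) - G (th1 (\<phi> t))) * (inverse (p1 (\<phi> t)) * p2 t)"]) auto
  qed (rule ch)
  have philim: "filterlim \<phi> at_top at_top"
    unfolding filterlim_at_top
  proof
    fix Z :: real
    have "th1 (max Z 0) < 1" using pos1[of "max Z 0"] by auto
    then have "\<forall>\<^sub>F s in at_top. th2 s > th1 (max Z 0)" using lT2 order_tendstoD(1) by blast
    moreover have "\<forall>\<^sub>F s in at_top. (0::real) \<le> s" by (rule eventually_ge_at_top)
    ultimately show "\<forall>\<^sub>F s in at_top. Z \<le> \<phi> s"
    proof eventually_elim
      case (elim s)
      then have "th1 (max Z 0) < th1 (\<phi> s)" using phi by auto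
      then have "max Z 0 < \<phi> s" using A.smono_le[OF pos1 lT1, of "\<phi> s" "max Z 0"] phi[OF elim(2)] by auto
      then show ?case by simp
    qed
  qed
  have "((\<lambda>s. p1 (\<phi> s)) \<longlongrightarrow> 0) at_top" by (rule filterlim_compose[OF lP1 philim])
  then have "(h \<longlongrightarrow> 0 - 0) at_top" unfolding h_def by (intro tendsto_diff lP2)
  then have "\<forall>\<^sub>F s in at_top. h s < h 0 / 2" using h0 order_tendstoD(2)[of h 0 at_top "h 0 / 2"] by simp
  then obtain N where N: "\<And>s. s \<ge> N \<Longrightarrow> h s < h 0 / 2" unfolding eventually_at_top_linorder by blast
  have "h 0 \<le> h (max N 0)" by (rule hmono) simp
  moreover have "h (max N 0) < h 0 / 2" by (rule N) simp
  ultimately show False using h0 by linarith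
qed





definition clamp01 :: "real \<Rightarrow> real" where "clamp01 x = max 0 (min 1 x)"

lemma clamp_lip: "\<bar>clamp01 x - clamp01 y\<bar> \<le> \<bar>x - y\<bar>"
  unfolding clamp01_def by linarith

lemma clamp_in: "clamp01 x \<in> {0..1}" unfolding clamp01_def by auto

lemma clamp_id: "x \<in> {0..1} \<Longrightarrow> clamp01 x = x" unfolding clamp01_def by auto

lemma Psi_ext:
  fixes Psi :: "real \<Rightarrow> real"
  assumes Psi_smooth: "\<exists>g. smooth_real g \<and> (\<forall>x\<in>{0..1}. g x = Psi x)"
    and Psi_nonneg: "\<forall>x\<in>{0..1}. Psi x \<ge> 0"
    and Psi_pos: "\<forall>x\<in>{0..<1}. Psi x > 0"
    and Psi_1: "Psi 1 = 0"
  shows "\<exists>G M. 0 \<le> M \<and> (\<forall>x y. \<bar>G x - G y\<bar> \<le> M * \<bar>x - y\<bar>) \<and> (\<forall>x\<in>{0..1}. G x = Psi x)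
     \<and> (\<forall>x. 0 \<le> G x) \<and> (\<forall>x\<ge>1. G x = 0) \<and> (\<forall>x<1. 0 < G x)"
proof -
  obtain g where g: "smooth_real g" "\<And>x. x \<in> {0..1} \<Longrightarrow> g x = Psi x" using Psi_smooth by blast
  have dg: "g differentiable (at x)" for x
    using g(1) unfolding smooth_real_def by (metis funpow_0)
  have ddg: "deriv g differentiable (at x)" for x
  proof -
    have "((deriv ^^ 1) g) differentiable (at x)" using g(1) unfolding smooth_real_def by blast
    then show ?thesis by simp
  qed
  have cdg: "continuous_on {0..1} (deriv g)"
    by (rule differentiable_imp_continuous_on) (use ddg in \<open>auto simp: differentiable_on_def intro: differentiable_at_withinI\<close>)
  have ne: "{0..1::real} \<noteq> {}" by simp
  obtain xM where xM: "xM \<in> {0..1}" "\<And>y. y \<in> {0..1} \<Longrightarrow> \<bar>deriv g y\<bar> \<le> \<bar>deriv g xM\<bar>"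
    using continuous_attains_sup[OF compact_Icc ne continuous_on_rabs[OF cdg]] by blast
  define M where "M = \<bar>deriv g xM\<bar>"
  have M0: "0 \<le> M" unfolding M_def by simp
  have lip0: "\<bar>g y - g x\<bar> \<le> M * \<bar>y - x\<bar>" if xy: "x \<in> {0..1}" "y \<in> {0..1}" "x < y" for x y
  proof -
    have "\<exists>l z. x < z \<and> z < y \<and> (g has_real_derivative l) (at z) \<and> g y - g x = (y - x) * l"
    proof (rule MVT[OF xy(3)])
      show "continuous_on {x..y} g"
        by (rule differentiable_imp_continuous_on) (use dg in \<open>auto simp: differentiable_on_def intro: differentiable_at_withinI\<close>)
    qed (use dg in auto)
    then obtain l z where lz: "x < z" "z < y" "(g has_real_derivative l) (at z)" "g y - g x = (y - x) * l" by blast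
    have "l = deriv g z" using lz(3) DERIV_deriv_iff_real_differentiable[of g z] dg DERIV_unique by blast
    then have "\<bar>l\<bar> \<le> M" unfolding M_def using xM(2)[of z] lz xy by auto
    then have "\<bar>y - x\<bar> * \<bar>l\<bar> \<le> \<bar>y - x\<bar> * M" by (intro mult_left_mono) auto
    then show ?thesis using lz(4) by (simp add: abs_mult mult.commute)
  qed
  have lip1: "\<bar>g y - g x\<bar> \<le> M * \<bar>y - x\<bar>" if xy: "x \<in> {0..1}" "y \<in> {0..1}" for x y
  proof (cases x y rule: linorder_cases)
    case less then show ?thesis using lip0 xy by auto
  next
    case equal then show ?thesis by simp
  next
    case greater then show ?thesis using lip0[of y x] xy by (simp add: abs_minus_commute)
  qed
  define G where "G x = g (clamp01 x)" for x
  have "\<bar>G x - G y\<bar> \<le> M * \<bar>x - y\<bar>" for x y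
  proof -
    have "\<bar>G x - G y\<bar> \<le> M * \<bar>clamp01 x - clamp01 y\<bar>" unfolding G_def by (rule lip1) (use clamp_in in auto)
    also have "\<dots> \<le> M * \<bar>x - y\<bar>" using M0 clamp_lip by (intro mult_left_mono) auto
    finally show ?thesis .
  qed
  moreover have "\<forall>x\<in>{0..1}. G x = Psi x" unfolding G_def using g(2) clamp_id by simp
  moreover have "\<forall>x. 0 \<le> G x" unfolding G_def using g(2) clamp_in Psi_nonneg by simp
  moreover have "\<forall>x\<ge>1. G x = 0" unfolding G_def clamp01_def using g(2)[of 1] Psi_1 by simp
  moreover have "\<forall>x<1. 0 < G x"
  proof (intro allI impI)
    fix x :: real assume "x < 1"
    then have "clamp01 x \<in> {0..<1}" unfolding clamp01_def by auto
    then show "0 < G x" unfolding G_def using g(2) Psi_pos by auto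
  qed
  ultimately show ?thesis using M0 by blast
qed

lemma solid_side:
  fixes theta d1 d2 :: "real \<Rightarrow> real" and c :: real
  assumes dT: "\<forall>x\<le>0. (theta has_real_derivative d1 x) (at x within {..0})"
    and dD: "\<forall>x\<le>0. (d1 has_real_derivative d2 x) (at x within {..0})"
    and eq: "\<forall>x<0. d2 x + c * d1 x = 0"
    and lT: "(theta \<longlongrightarrow> 0) at_bot" and lD: "(d1 \<longlongrightarrow> 0) at_bot"
  shows "d1 0 = - c * theta 0"
proof -
  define F where "F x = d1 x + c * theta x" for x
  have cF: "continuous_on {..0} F"
  proof -
    have "continuous_on {..0} theta" "continuous_on {..0} d1"
      using dT dD DERIV_continuous continuous_on_eq_continuous_within by fastforce+
    then show ?thesis unfolding F_def by (intro continuous_intros)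
  qed
  have Fc: "F x = F 0" if x: "x < 0" for x
  proof -
    have "F 0 = F x"
    proof (rule DERIV_isconst_end[OF x])
      show "continuous_on {x..0} F" by (rule continuous_on_subset[OF cF]) auto
      fix t assume t: "x < t" "t < 0"
      have i: "at t within {..0} = at t" by (rule at_within_interior) (use t in auto)
      have a: "(theta has_real_derivative d1 t) (at t)" using dT t i by (metis less_imp_le)
      have b: "(d1 has_real_derivative d2 t) (at t)" using dD t i by (metis less_imp_le)
      have "(F has_real_derivative d2 t + c * d1 t) (at t)"
        unfolding F_def by (rule DERIV_add[OF b DERIV_cmult[OF a]])
      then show "(F has_real_derivative 0) (at t)" using eq t by simp
    qed
    then show ?thesis by simp
  qed
  have "(F \<longlongrightarrow> 0 + c * 0) at_bot" unfolding F_def by (intro tendsto_intros lT lD)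
  moreover have "(F \<longlongrightarrow> F 0) at_bot"
  proof (rule tendsto_eventually)
    show "\<forall>\<^sub>F x in at_bot. F x = F 0" unfolding eventually_at_bot_dense using Fc by blast
  qed
  ultimately have "F 0 = 0" using tendsto_unique[OF trivial_limit_at_bot_linorder] by force
  then show ?thesis unfolding F_def by simp
qed

lemma gas_at0:
  fixes theta e1 e2 G :: "real \<Rightarrow> real" and k :: real
  assumes cT: "continuous_on {0..} theta" and c1: "continuous_on {0..} e1" and c2: "continuous_on {0..} e2"
    and cG: "continuous_on UNIV G"
    and eq: "\<forall>x>0. e2 x = k * e1 x - G (theta x)"
  shows "e2 0 = k * e1 0 - G (theta 0)"
proof -
  define D where "D x = e2 x - (k * e1 x - G (theta x))" for x
  have cD: "continuous_on {0..} D" unfolding D_def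
    using continuous_on_compose2[OF cG cT] by (intro continuous_intros c1 c2 cT) auto
  have cl: "closed {x \<in> {0..}. D x = 0}" by (rule continuous_closed_preimage_constant[OF cD]) simp
  have sub: "{0<..} \<subseteq> {x \<in> {0..}. D x = 0}" using eq unfolding D_def by auto
  have "closure {0<..} \<subseteq> {x \<in> {0..}. D x = 0}" by (rule closure_minimal[OF sub cl])
  then have "D 0 = 0" by auto
  then show ?thesis unfolding D_def by simp
qed





theorem proposition8:
  fixes eta Qg Qp cmax cmin :: real
    and Psi ths :: "real \<Rightarrow> real"
  assumes eta: "eta > 0" and Qg: "Qg > 0" and Qp: "Qp > 0"
    and Psi_smooth: "\<exists>g. smooth_real g \<and> (\<forall>x\<in>{0..1}. g x = Psi x)"
    and Psi_nonneg: "\<forall>x\<in>{0..1}. Psi x \<ge> 0"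
    and Psi_pos: "\<forall>x\<in>{0..<1}. Psi x > 0"
    and Psi_1: "Psi 1 = 0"
    and cmax: "cmax < 0"
    and ths_range: "\<forall>c\<in>{cmax..0}. ths c \<in> {0..1}"
    and ths_cont: "continuous_on {cmax..0} ths"
    and ths_decr: "\<forall>a\<in>{cmax..0}. \<forall>b\<in>{cmax..0}. a < b \<longrightarrow> ths b < ths a"
    and ths_0: "ths 0 = 0" and ths_cmax: "ths cmax = 1"
    and ths_smooth: "\<exists>g. smooth_on_open {..<0} g \<and> (\<forall>c\<in>{cmax..<0}. g c = ths c)
                         \<and> (\<forall>c\<in>{cmax..<0}. deriv g c < 0)"
    and cmin: "cmin \<in> {cmax<..<0}" and ths_cmin: "ths cmin = Qp / (Qg + Qp)"
  shows "\<exists>c. c \<in> {cmax<..<cmin} \<and> (\<exists>theta. solves_Pc eta Qg Qp Psi ths c theta) \<and>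
           (\<forall>c'\<in>{cmax..0}. (\<exists>theta. solves_Pc eta Qg Qp Psi ths c' theta) \<longrightarrow> c' = c)"
proof -
  define r where "r = Qp / (Qg + Qp)"
  have r01: "0 < r" "r < 1" unfolding r_def using Qg Qp by auto
  obtain G M where M0: "0 \<le> M" and lip: "\<And>x y. \<bar>G x - G y\<bar> \<le> M * \<bar>x - y\<bar>"
    and GPsi: "\<And>x. x \<in> {0..1} \<Longrightarrow> G x = Psi x" and Gnn: "\<And>x. 0 \<le> G x"
    and G1: "\<And>x. 1 \<le> x \<Longrightarrow> G x = 0" and Gpos: "\<And>x. x < 1 \<Longrightarrow> 0 < G x"
    using Psi_ext[OF Psi_smooth Psi_nonneg Psi_pos Psi_1] by metis
  interpret picloc G M by unfold_locales (use M0 lip in auto)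
  have Gc: "continuous_on UNIV G" by (rule G_cont)
  have GM1: "G x \<le> M * (1 - x)" if "x \<in> {0..1}" for x
    using lip[of x 1] G1[of 1] that by auto
  define kf where "kf c = - eta * c" for c :: real
  define bf where "bf c = kf c * (ths c - r)" for c
  define TH where "TH c = solT G (kf c) (ths c) (bf c)" for c
  define PP where "PP c = solP G (kf c) (ths c) (bf c)" for c
  have kf0: "0 \<le> kf c" if "c \<le> 0" for c unfolding kf_def using eta that by (simp add: mult_nonneg_nonpos)
  have kfpos: "0 < kf c" if "c < 0" for c unfolding kf_def using eta that by (simp add: mult_pos_neg)
  have trajc: "traj (TH c) (PP c) (kf c) G" if "c \<le> 0" for c
    by unfold_locales (use solT_deriv solP_deriv kf0[OF that] Gnn Gc in \<open>auto simp: TH_def PP_def\<close>)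
  have TH0: "TH c 0 = ths c" and PP0: "PP c 0 = bf c" for c unfolding TH_def PP_def by (simp_all add: sol0)
  have ths_lt: "ths b < ths a" if "a \<in> {cmax..0}" "b \<in> {cmax..0}" "a < b" for a b
    using ths_decr that by blast
  have ths_le: "ths b \<le> ths a" if "a \<in> {cmax..0}" "b \<in> {cmax..0}" "a \<le> b" for a b
    using ths_lt[OF that(1,2)] that(3) by (cases "a = b") auto
  have ths_cmin': "ths cmin = r" unfolding r_def by (rule ths_cmin)
  have cmin': "cmax < cmin" "cmin < 0" using cmin by auto

  have pack: "c' \<in> {cmax<..<cmin} \<and> (\<forall>x\<ge>0. 0 < p x \<and> th x < 1)"
    if c': "c' \<in> {cmax..0}" and tr: "traj th p (kf c') G" and rng: "\<And>x. 0 \<le> x \<Longrightarrow> th x \<in> {0..1}"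
      and lp: "(p \<longlongrightarrow> 0) at_top" and th0: "th 0 = ths c'" and p0: "p 0 = bf c'" for c' th p
  proof -
    interpret T: traj th p "kf c'" G by (rule tr)
    have init: "\<not> (th 0 = 1 \<and> p 0 = 0)"
    proof
      assume a: "th 0 = 1 \<and> p 0 = 0"
      have "c' = cmax"
      proof (rule ccontr)
        assume "c' \<noteq> cmax"
        then have "ths c' < ths cmax" using ths_lt[of cmax c'] c' cmax by auto
        then show False using a th0 ths_cmax by simp
      qed
      then have "p 0 = kf cmax * (1 - r)" using p0 ths_cmax unfolding bf_def by simp
      moreover have "0 < kf cmax * (1 - r)" using kfpos[OF cmax] r01 by simp
      moreover have "p 0 = 0" using a by simp
      ultimately show False by linarith
    qed
    have pos: "\<forall>x\<ge>0. 0 < p x \<and> th x < 1"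
      by (rule T.sol_props[OF rng lp Gpos GM1 M0 init])
    have "c' \<noteq> cmax" using pos th0 ths_cmax by auto
    then have g1: "cmax < c'" using c' by auto
    have "0 < kf c' * (ths c' - r)" using pos p0 unfolding bf_def by auto
    then have "0 < kf c'" "r < ths c'" using kf0[of c'] c' by (auto simp: zero_less_mult_iff)
    then have "c' < cmin" using ths_le[of cmin c'] cmin' c' ths_cmin' by (cases "c' < cmin") auto
    then show ?thesis using g1 pos by auto
  qed
  have cmp: False
    if c1: "c1 \<in> {cmax<..<cmin}" and c2: "c2 \<in> {cmax<..<cmin}" and lt: "c2 < c1"
      and tr1: "traj th1 p1 (kf c1) G" and tr2: "traj th2 p2 (kf c2) G"
      and pos1: "\<forall>x\<ge>0. 0 < p1 x \<and> th1 x < 1" and pos2: "\<forall>x\<ge>0. 0 < p2 x \<and> th2 x < 1"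
      and l1: "(th1 \<longlongrightarrow> 1) at_top" "(p1 \<longlongrightarrow> 0) at_top"
      and l2: "(th2 \<longlongrightarrow> 1) at_top" "(p2 \<longlongrightarrow> 0) at_top"
      and i1: "th1 0 = ths c1" "p1 0 = bf c1" and i2: "th2 0 = ths c2" "p2 0 = bf c2"
    for c1 c2 th1 p1 th2 p2
  proof (rule compare[OF tr1 tr2 _ _ l1 l2])
    show "\<And>x. 0 \<le> x \<Longrightarrow> 0 < p1 x \<and> th1 x < 1" using pos1 by auto
    show "\<And>x. 0 \<le> x \<Longrightarrow> 0 < p2 x \<and> th2 x < 1" using pos2 by auto
    show "p1 0 = kf c1 * (th1 0 - r)" using i1 unfolding bf_def by simp
    show "p2 0 = kf c2 * (th2 0 - r)" using i2 unfolding bf_def by simp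
    show "kf c1 < kf c2" unfolding kf_def using lt eta by simp
    show "th1 0 < th2 0" using i1 i2 ths_lt[of c2 c1] c1 c2 lt cmin' by auto
    show "r < th2 0" using i2 ths_lt[of c2 cmin] c2 cmin' ths_cmin' by auto
  qed

  (* existence via shooting *)
  define S where "S = {cmax..cmin}"
  have S0: "S \<subseteq> {cmax..0}" unfolding S_def using cmin' by auto
  define L where "L = 1 + eta * \<bar>cmax\<bar> + M"
  have Lk: "1 + \<bar>kf c\<bar> \<le> L" if "c \<in> S" for c
  proof -
    have "\<bar>kf c\<bar> = eta * \<bar>c\<bar>" unfolding kf_def using eta by (simp add: abs_mult)
    also have "\<dots> \<le> eta * \<bar>cmax\<bar>" using that cmin' eta unfolding S_def by (intro mult_left_mono) auto
    finally show ?thesis unfolding L_def using M0 by simp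
  qed
  have LM: "M \<le> L" unfolding L_def using eta by simp
  have cths: "continuous_on S ths" by (rule continuous_on_subset[OF ths_cont S0])
  have ckf: "continuous_on S kf" unfolding kf_def by (intro continuous_intros)
  have cbf: "continuous_on S bf" unfolding bf_def kf_def by (intro continuous_intros cths)
  have cTP: "continuous_on S (\<lambda>c. TH c x) \<and> continuous_on S (\<lambda>c. PP c x)" if "0 \<le> x" for x
    unfolding TH_def PP_def by (rule param_cont[OF ckf cths cbf Lk LM that])
  define Ovs where "Ovs = {c. \<exists>y\<ge>0. TH c y > 1}"
  define Uns where "Uns = {c. \<exists>x\<ge>0. PP c x < 0 \<and> TH c x < 1}"
  have "\<forall>y\<in>{0..}. \<exists>A. open A \<and> A \<inter> S = (\<lambda>c. TH c y) -` {1<..} \<inter> S"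
    using cTP continuous_on_open_invariant by (metis atLeast_iff open_greaterThan)
  then obtain AO where AO: "\<And>y. y \<in> {0..} \<Longrightarrow> open (AO y) \<and> AO y \<inter> S = (\<lambda>c. TH c y) -` {1<..} \<inter> S"
    by metis
  have "\<forall>x\<in>{0..}. \<exists>A. open A \<and> A \<inter> S = (\<lambda>c. PP c x) -` {..<0} \<inter> S"
    using cTP continuous_on_open_invariant by (metis atLeast_iff open_lessThan)
  then obtain AU1 where AU1: "\<And>x. x \<in> {0..} \<Longrightarrow> open (AU1 x) \<and> AU1 x \<inter> S = (\<lambda>c. PP c x) -` {..<0} \<inter> S"
    by metis
  have "\<forall>x\<in>{0..}. \<exists>A. open A \<and> A \<inter> S = (\<lambda>c. TH c x) -` {..<1} \<inter> S"
    using cTP continuous_on_open_invariant by (metis atLeast_iff open_lessThan)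
  then obtain AU2 where AU2: "\<And>x. x \<in> {0..} \<Longrightarrow> open (AU2 x) \<and> AU2 x \<inter> S = (\<lambda>c. TH c x) -` {..<1} \<inter> S"
    by metis
  define OA where "OA = (\<Union>y\<in>{0..}. AO y)"
  define UA where "UA = (\<Union>x\<in>{0..}. AU1 x \<inter> AU2 x)"
  have oOA: "open OA" unfolding OA_def using AO by auto
  have oUA: "open UA" unfolding UA_def using AU1 AU2 by (intro open_UN ballI open_Int) auto
  have OAS: "OA \<inter> S = Ovs \<inter> S"
  proof
    show "OA \<inter> S \<subseteq> Ovs \<inter> S" unfolding OA_def Ovs_def using AO by fastforce
    show "Ovs \<inter> S \<subseteq> OA \<inter> S"
    proof
      fix c assume "c \<in> Ovs \<inter> S"
      then obtain y where y: "0 \<le> y" "TH c y > 1" "c \<in> S" unfolding Ovs_def by auto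
      then have "c \<in> AO y" using AO[of y] by auto
      then show "c \<in> OA \<inter> S" unfolding OA_def using y by auto
    qed
  qed
  have UAS: "UA \<inter> S = Uns \<inter> S"
  proof
    show "UA \<inter> S \<subseteq> Uns \<inter> S" unfolding UA_def Uns_def using AU1 AU2 by fastforce
    show "Uns \<inter> S \<subseteq> UA \<inter> S"
    proof
      fix c assume "c \<in> Uns \<inter> S"
      then obtain x where x: "0 \<le> x" "PP c x < 0" "TH c x < 1" "c \<in> S" unfolding Uns_def by auto
      then have "c \<in> AU1 x" "c \<in> AU2 x" using AU1[of x] AU2[of x] by auto
      then show "c \<in> UA \<inter> S" unfolding UA_def using x by auto
    qed
  qed
  have disj: "OA \<inter> UA \<inter> S = {}"
  proof (rule ccontr)
    assume "OA \<inter> UA \<inter> S \<noteq> {}"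
    then obtain c where c: "c \<in> Ovs" "c \<in> Uns" "c \<in> S" using OAS UAS by blast
    interpret T: traj "TH c" "PP c" "kf c" G by (rule trajc) (use c S0 in auto)
    obtain y where y: "0 \<le> y" "TH c y > 1" using c unfolding Ovs_def by auto
    obtain x where x: "0 \<le> x" "PP c x < 0" "TH c x < 1" using c unfolding Uns_def by auto
    have "TH c 0 \<le> 1" using TH0 ths_range c S0 by auto
    then show False using T.not_both[OF G1 _ y x] by auto
  qed
  have cmaxO: "cmax \<in> Ovs"
  proof -
    interpret T: traj "TH cmax" "PP cmax" "kf cmax" G by (rule trajc) (use cmax in auto)
    have "PP cmax 0 > 0" using PP0 kfpos[OF cmax] r01 ths_cmax unfolding bf_def by simp
    then show ?thesis using T.O_start TH0 ths_cmax unfolding Ovs_def by auto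
  qed
  have cminU: "cmin \<in> Uns"
  proof -
    interpret T: traj "TH cmin" "PP cmin" "kf cmin" G by (rule trajc) (use cmin' in auto)
    have "TH cmin 0 < 1" "PP cmin 0 = 0" "G (TH cmin 0) > 0"
      using TH0 PP0 ths_cmin' r01 Gpos unfolding bf_def by auto
    then show ?thesis using T.U_start unfolding Uns_def by auto
  qed
  have "\<not> S \<subseteq> OA \<union> UA"
  proof
    assume "S \<subseteq> OA \<union> UA"
    then have "OA \<inter> S = {} \<or> UA \<inter> S = {}"
      using connectedD[OF _ oOA oUA disj] unfolding S_def by auto
    moreover have "cmax \<in> OA \<inter> S" "cmin \<in> UA \<inter> S" using OAS UAS cmaxO cminU cmin' unfolding S_def by auto
    ultimately show False by auto
  qed
  then obtain c where cS: "c \<in> S" and cO: "c \<notin> Ovs" and cU: "c \<notin> Uns" using OAS UAS by blast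
  have cc: "c \<in> {cmax<..<cmin}" using cS cO cU cmaxO cminU unfolding S_def
    by (cases "c = cmax"; cases "c = cmin") auto
  have cneg: "c < 0" using cc cmin' by auto
  interpret TC: traj "TH c" "PP c" "kf c" G by (rule trajc) (use cneg in auto)
  have thc: "0 \<le> ths c" "ths c < 1"
    using ths_range ths_lt[of cmax c] ths_cmax cc cmin' by auto
  have goodc: "(\<forall>x\<ge>0. TH c x \<in> {0..1}) \<and> (TH c \<longlongrightarrow> 1) at_top \<and> (PP c \<longlongrightarrow> 0) at_top"
    by (rule TC.good[OF G1 Gpos kfpos[OF cneg]]) (use thc TH0 cO cU in \<open>auto simp: Ovs_def Uns_def\<close>)
  have cc0: "c \<in> {cmax..0}" using cc cmin' by auto
  have packc: "c \<in> {cmax<..<cmin} \<and> (\<forall>x\<ge>0. 0 < PP c x \<and> TH c x < 1)"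
    by (rule pack[OF cc0 trajc]) (use cneg goodc TH0 PP0 in auto)
  define theta where "theta = (\<lambda>x. if x \<le> 0 then ths c * exp (-c*x) else TH c x)"
  define d1 where "d1 x = -c * ths c * exp (-c*x)" for x
  define d2 where "d2 x = c * c * ths c * exp (-c*x)" for x
  define e2 where "e2 x = kf c * PP c x - G (TH c x)" for x
  have thetaL: "theta x = ths c * exp (-c*x)" if "x \<le> 0" for x unfolding theta_def using that by simp
  have thetaR: "theta x = TH c x" if "0 \<le> x" for x
    unfolding theta_def using that TH0 by (cases "x = 0") auto
  have A1: "\<forall>x. theta x \<in> {0..1}"
  proof
    fix x :: real
    show "theta x \<in> {0..1}"
    proof (cases "x \<le> 0")
      case True
      have "exp (-c*x) \<le> 1" using True cneg by (simp add: mult_nonpos_nonpos)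
      then have "ths c * exp (-c*x) \<le> ths c * 1" using thc by (intro mult_left_mono) auto
      then show ?thesis using thetaL[OF True] thc by auto
    next
      case False
      then show ?thesis using thetaR[of x] goodc by auto
    qed
  qed
  have A2: "continuous_on UNIV theta"
    unfolding theta_def
  proof (rule continuous_on_cases_le[where S=UNIV and h="\<lambda>x. x" and a=0 and f="\<lambda>x. ths c * exp (-c*x)" and g="TH c"])
    show "continuous_on {x \<in> UNIV. x \<le> 0} (\<lambda>x. ths c * exp (-c*x))" by (intro continuous_intros)
    show "continuous_on {x \<in> UNIV. 0 \<le> x} (TH c)" using TC.contT unfolding atLeast_def by simp
    show "\<And>x. x \<in> UNIV \<Longrightarrow> x = 0 \<Longrightarrow> ths c * exp (-c*x) = TH c x" using TH0 by simp
  qed (intro continuous_intros)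
  have lin: "((\<lambda>x. -c*x) has_real_derivative -c) (at x)" for x
    using DERIV_cmult[OF DERIV_ident, of "-c" x UNIV] by simp
  have B1: "\<forall>x\<le>0. (theta has_real_derivative d1 x) (at x within {..0})"
  proof (intro allI impI)
    fix x :: real assume x: "x \<le> 0"
    have "((\<lambda>x. ths c * exp (-c*x)) has_real_derivative ths c * (exp (-c*x) * (-c))) (at x within {..0})"
      by (rule DERIV_cmult[OF has_field_derivative_at_within[OF DERIV_fun_exp[OF lin]]])
    then have "((\<lambda>x. ths c * exp (-c*x)) has_real_derivative d1 x) (at x within {..0})"
      unfolding d1_def by (simp add: algebra_simps)
    then show "(theta has_real_derivative d1 x) (at x within {..0})"
      by (rule has_field_derivative_transform_within[where d=1]) (use x thetaL in auto)
  qed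
  have B2: "\<forall>x\<le>0. (d1 has_real_derivative d2 x) (at x within {..0})"
  proof (intro allI impI)
    fix x :: real assume x: "x \<le> 0"
    have "((\<lambda>x. (-c * ths c) * exp (-c*x)) has_real_derivative (-c * ths c) * (exp (-c*x) * (-c))) (at x within {..0})"
      by (rule DERIV_cmult[OF has_field_derivative_at_within[OF DERIV_fun_exp[OF lin]]])
    then show "(d1 has_real_derivative d2 x) (at x within {..0})"
      unfolding d1_def d2_def by (simp add: algebra_simps)
  qed
  have B3: "continuous_on {..0} d2" unfolding d2_def by (intro continuous_intros)
  have B4: "\<forall>x\<ge>0. (theta has_real_derivative PP c x) (at x within {0..})"
  proof (intro allI impI)
    fix x :: real assume x: "0 \<le> x"
    show "(theta has_real_derivative PP c x) (at x within {0..})"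
      by (rule has_field_derivative_transform_within[OF TC.dT[OF x], where d=1]) (use x thetaR in auto)
  qed
  have B5: "\<forall>x\<ge>0. (PP c has_real_derivative e2 x) (at x within {0..})"
    unfolding e2_def using TC.dP by auto
  have B6: "continuous_on {0..} e2"
    unfolding e2_def using continuous_on_compose2[OF Gc TC.contT]
    by (intro continuous_intros TC.contP) auto
  have B7: "\<forall>x<0. d2 x + c * d1 x = 0" unfolding d1_def d2_def by (simp add: algebra_simps)
  have B8: "\<forall>x>0. e2 x + eta * c * PP c x = - Psi (theta x)"
  proof (intro allI impI)
    fix x :: real assume x: "0 < x"
    have "theta x = TH c x" using thetaR x by auto
    moreover have "G (TH c x) = Psi (TH c x)" using GPsi goodc x by auto
    ultimately show "e2 x + eta * c * PP c x = - Psi (theta x)" unfolding e2_def kf_def by simp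
  qed
  have ex0: "((\<lambda>x. exp (-c*x)) \<longlongrightarrow> 0) at_bot"
  proof -
    have "filterlim (\<lambda>x. (-c) * x) at_bot at_bot"
      by (rule filterlim_tendsto_pos_mult_at_bot[OF tendsto_const _ filterlim_ident]) (use cneg in auto)
    then show ?thesis by (rule filterlim_compose[OF exp_at_bot])
  qed
  have B9: "(theta \<longlongrightarrow> 0) at_bot"
  proof -
    have "((\<lambda>x. ths c * exp (-c*x)) \<longlongrightarrow> ths c * 0) at_bot" by (intro tendsto_intros ex0)
    moreover have "\<forall>\<^sub>F x in at_bot. ths c * exp (-c*x) = theta x"
      using eventually_le_at_bot[of 0] by eventually_elim (simp add: thetaL)
    ultimately show ?thesis using tendsto_cong by fastforce
  qed
  have B10: "theta 0 = ths c" using thetaL[of 0] by simp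
  have B11: "(theta \<longlongrightarrow> 1) at_top"
  proof -
    have "\<forall>\<^sub>F x in at_top. TH c x = theta x"
      using eventually_ge_at_top[of 0] by eventually_elim (simp add: thetaR)
    then show ?thesis using goodc tendsto_cong by fastforce
  qed
  have B12: "(d1 \<longlongrightarrow> 0) at_bot"
  proof -
    have "((\<lambda>x. (-c * ths c) * exp (-c*x)) \<longlongrightarrow> (-c * ths c) * 0) at_bot" by (intro tendsto_intros ex0)
    then show ?thesis unfolding d1_def by simp
  qed
  have B13: "(PP c \<longlongrightarrow> 0) at_top" using goodc by auto
  have B14: "PP c 0 - eta * d1 0 = S_term eta Qp Qg c"
  proof -
    have "Qp / (Qp + Qg) = r" unfolding r_def by (simp add: add.commute)
    then show ?thesis unfolding S_term_def PP0 bf_def kf_def d1_def by (simp add: algebra_simps)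
  qed
  have sol: "solves_Pc eta Qg Qp Psi ths c theta"
    unfolding solves_Pc_def
    using A1 A2 B1 B2 B3 B4 B5 B6 B7 B8 B9 B10 B11 B12 B13 B14 by blast
  have uniq: "c' = c" if c': "c' \<in> {cmax..0}" and sc: "solves_Pc eta Qg Qp Psi ths c' theta'" for c' theta'
  proof -
    obtain d1' d2' e1' e2' where rng': "\<forall>x. theta' x \<in> {0..1}"
      and hT1: "\<forall>x\<le>0. (theta' has_real_derivative d1' x) (at x within {..0})"
      and hD1: "\<forall>x\<le>0. (d1' has_real_derivative d2' x) (at x within {..0})"
      and hT2: "\<forall>x\<ge>0. (theta' has_real_derivative e1' x) (at x within {0..})"
      and hE: "\<forall>x\<ge>0. (e1' has_real_derivative e2' x) (at x within {0..})"
      and ce2: "continuous_on {0..} e2'"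
      and eqs: "\<forall>x<0. d2' x + c' * d1' x = 0"
      and eqg: "\<forall>x>0. e2' x + eta * c' * e1' x = - Psi (theta' x)"
      and lT0: "(theta' \<longlongrightarrow> 0) at_bot" and t0: "theta' 0 = ths c'"
      and lT1: "(theta' \<longlongrightarrow> 1) at_top" and lD: "(d1' \<longlongrightarrow> 0) at_bot"
      and lE: "(e1' \<longlongrightarrow> 0) at_top"
      and hb: "e1' 0 - eta * d1' 0 = S_term eta Qp Qg c'"
      using sc unfolding solves_Pc_def by blast
    have d10: "d1' 0 = - c' * theta' 0" by (rule solid_side[OF hT1 hD1 eqs lT0 lD])
    have e10: "e1' 0 = bf c'"
    proof -
      have "Qp / (Qp + Qg) = r" unfolding r_def by (simp add: add.commute)
      then show ?thesis using hb d10 t0 unfolding S_term_def bf_def kf_def by (simp add: algebra_simps)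
    qed
    have cT': "continuous_on {0..} theta'"
      using hT2 DERIV_continuous continuous_on_eq_continuous_within by fastforce
    have ce1: "continuous_on {0..} e1'"
      using hE DERIV_continuous continuous_on_eq_continuous_within by fastforce
    have eq2: "\<forall>x>0. e2' x = kf c' * e1' x - G (theta' x)"
      using eqg GPsi rng' unfolding kf_def by (auto simp: algebra_simps)
    have e20: "e2' 0 = kf c' * e1' 0 - G (theta' 0)" by (rule gas_at0[OF cT' ce1 ce2 Gc eq2])
    have e2all: "e2' x = kf c' * e1' x - G (theta' x)" if "0 \<le> x" for x
      using e20 eq2 that by (cases "x = 0") auto
    have tr': "traj theta' e1' (kf c') G"
      by unfold_locales (use hT2 hE e2all kf0 c' Gnn Gc in auto)
    have pk': "c' \<in> {cmax<..<cmin} \<and> (\<forall>x\<ge>0. 0 < e1' x \<and> theta' x < 1)"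
      by (rule pack[OF c' tr' _ lE t0 e10]) (use rng' in auto)
    show "c' = c"
    proof (cases c' c rule: linorder_cases)
      case less
      show ?thesis
        by (rule FalseE, rule cmp[of c c' "TH c" "PP c" theta' e1'])
           (use less pk' packc trajc tr' goodc lT1 lE TH0 PP0 t0 e10 cneg in auto)
    next
      case equal then show ?thesis .
    next
      case greater
      show ?thesis
        by (rule FalseE, rule cmp[of c' c theta' e1' "TH c" "PP c"])
           (use greater pk' packc trajc tr' goodc lT1 lE TH0 PP0 t0 e10 cneg in auto)
    qed
  qed
  show ?thesis using cc sol uniq by blast
qed



end
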